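(* Let $\Gamma$ be a uniform layered graph with unique minimal vertex, and $n\ge2$. A basis $L$ of $B_n$ is upper vertex-like if and only if there exists a bijection $\psi:V_n\to L$ with $\kappa_v=\kappa_{\psi(v)}$ for all $v\in V_n$.
   Context: A layered graph is a finite directed graph $\Gamma=(V,E)$ with $V=\bigsqcup_{i=0}^{N}V_i$ such that every edge from $V_i$ goes to $V_{i-1}$; $|v|=i$ for $v\in V_i$, $V_+=\bigsqcup_{i\ge1}V_i$, $V_{\ge k}=\bigsqcup_{i\ge k}V_i$, $S(v)=\{w:(v,w)\in E\}$, nonempty for $v\in V_+$, $|V_0|=1$. $\Gamma$ is uniform if for every $v\in V_{\ge2}$ the elements of $S(v)$ form a single class under the transitive closure of $w\approx u$ iff $S(w)\cap S(u)\ne\emptyset$. Over a field $\mathbb F$, $B(\Gamma)=T(V_+)/R_B$ with $R_B$ the two-sided ideal generated by $\{vw: v,w\in V_+,(v,w)\notin E\}\cup\{v\sum_{w\in S(v)}w: v\in V_{\ge2}\}$, doubly graded with $v_1\cdots v_m$ in bidegree $(m,\sum|v_i|)$; $B_n=\operatorname{span}V_n$ is the bidegree $(1,n)$ part. For $a\in B_n$, $\kappa_a=\ker(B_{n-1}\to B(\Gamma),b\mapsto ab)$. The restriction $\Gamma|_n$ is the layered graph with vertex set $\bigcup_{i\le n}V_i$ and the edges between them; $B(\Gamma|_n)$ is the subalgebra of $B(\Gamma)$ generated by $\bigcup_{i=1}^nV_i$. A basis $L$ of $B_n$ is upper vertex-like if there is a doubly graded algebra automorphism of $B(\Gamma|_n)$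 fixing every vertex in $\bigcup_{i=1}^{n-1}V_i$ and mapping the set $V_n$ onto $L$. *)

theory Defs
  imports Main
begin

definition lay :: "'v set \<Rightarrow> ('v \<Rightarrow> nat) \<Rightarrow> nat \<Rightarrow> 'v set" where
  "lay V lev i = {v \<in> V. lev v = i}"

definition succs :: "('v \<times> 'v) set \<Rightarrow> 'v \<Rightarrow> 'v set" where
  "succs E v = {w. (v, w) \<in> E}"

definition Vplus :: "'v set \<Rightarrow> ('v \<Rightarrow> nat) \<Rightarrow> 'v set" where
  "Vplus V lev = {v \<in> V. 1 \<le> lev v}"

definition layered_graph :: "'v set \<Rightarrow> ('v \<Rightarrow> nat) \<Rightarrow> ('v \<times> 'v) set \<Rightarrow> bool" where
  "layered_graph V lev E \<longleftrightarrow>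
     finite V \<and> E \<subseteq> V \<times> V \<and>
     (\<forall>(v, w) \<in> E. 1 \<le> lev v \<and> lev w = lev v - 1) \<and>
     (\<forall>v \<in> V. 1 \<le> lev v \<longrightarrow> succs E v \<noteq> {}) \<and>
     card (lay V lev 0) = 1"

definition meet_rel :: "('v \<times> 'v) set \<Rightarrow> 'v \<Rightarrow> ('v \<times> 'v) set" where
  "meet_rel E v = {(w, u). w \<in> succs E v \<and> u \<in> succs E v \<and> succs E w \<inter> succs E u \<noteq> {}}"

definition uniform :: "'v set \<Rightarrow> ('v \<Rightarrow> nat) \<Rightarrow> ('v \<times> 'v) set \<Rightarrow> bool" where
  "uniform V lev E \<longleftrightarrow>
     (\<forall>v \<in> V. 2 \<le> lev v \<longrightarrow>
        (\<forall>w \<in> succs E v. \<forall>u \<in> succs E v. (w, u) \<in> (meet_rel E v)\<^sup>*))"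

definition restrV :: "'v set \<Rightarrow> ('v \<Rightarrow> nat) \<Rightarrow> nat \<Rightarrow> 'v set" where
  "restrV V lev n = {v \<in> V. lev v \<le> n}"

definition restrE :: "'v set \<Rightarrow> ('v \<Rightarrow> nat) \<Rightarrow> ('v \<times> 'v) set \<Rightarrow> nat \<Rightarrow> ('v \<times> 'v) set" where
  "restrE V lev E n = E \<inter> (restrV V lev n \<times> restrV V lev n)"

section \<open>Free (tensor) algebra over a field, elements as finitely supported functions on words\<close>

definition tensor_alg :: "'v set \<Rightarrow> ('v list \<Rightarrow> 'k::field) set" where
  "tensor_alg A = {x. finite {w. x w \<noteq> 0} \<and> (\<forall>w. x w \<noteq> 0 \<longrightarrow> set w \<subseteq> A)}"

definition tzero :: "'v list \<Rightarrow> 'k::field" where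
  "tzero = (\<lambda>w. 0)"

definition tadd :: "('v list \<Rightarrow> 'k::field) \<Rightarrow> ('v list \<Rightarrow> 'k) \<Rightarrow> 'v list \<Rightarrow> 'k" where
  "tadd x y = (\<lambda>w. x w + y w)"

definition tsub :: "('v list \<Rightarrow> 'k::field) \<Rightarrow> ('v list \<Rightarrow> 'k) \<Rightarrow> 'v list \<Rightarrow> 'k" where
  "tsub x y = (\<lambda>w. x w - y w)"

definition tscale :: "'k::field \<Rightarrow> ('v list \<Rightarrow> 'k) \<Rightarrow> 'v list \<Rightarrow> 'k" where
  "tscale c x = (\<lambda>w. c * x w)"

definition tmul :: "('v list \<Rightarrow> 'k::field) \<Rightarrow> ('v list \<Rightarrow> 'k) \<Rightarrow> 'v list \<Rightarrow> 'k" where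
  "tmul x y = (\<lambda>w. \<Sum>i\<le>length w. x (take i w) * y (drop i w))"

definition tmon :: "'v list \<Rightarrow> 'v list \<Rightarrow> 'k::field" where
  "tmon w = (\<lambda>u. if u = w then 1 else 0)"

definition is_two_sided_ideal :: "'v set \<Rightarrow> ('v list \<Rightarrow> 'k::field) set \<Rightarrow> bool" where
  "is_two_sided_ideal A I \<longleftrightarrow>
     I \<subseteq> tensor_alg A \<and> tzero \<in> I \<and>
     (\<forall>x \<in> I. \<forall>y \<in> I. tadd x y \<in> I) \<and>
     (\<forall>c. \<forall>x \<in> I. tscale c x \<in> I) \<and>
     (\<forall>a \<in> tensor_alg A. \<forall>x \<in> I. tmul a x \<in> I \<and> tmul x a \<in> I)"

definition ideal_gen :: "'v set \<Rightarrow> ('v list \<Rightarrow> 'k::field) set \<Rightarrow> ('v list \<Rightarrow> 'k) set" where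
  "ideal_gen A G = \<Inter> {I. is_two_sided_ideal A I \<and> G \<subseteq> I}"

definition hom_bideg :: "('v \<Rightarrow> nat) \<Rightarrow> nat \<Rightarrow> nat \<Rightarrow> ('v list \<Rightarrow> 'k::field) \<Rightarrow> bool" where
  "hom_bideg lev m d x \<longleftrightarrow> (\<forall>w. x w \<noteq> 0 \<longrightarrow> length w = m \<and> sum_list (map lev w) = d)"

section \<open>The algebra B(Gamma) = T(V_+)/R_B\<close>

text \<open>Generators of R_B: vw for non-edges, and v * (sum of w in S(v)) for |v| >= 2.\<close>
definition relB :: "'v set \<Rightarrow> ('v \<Rightarrow> nat) \<Rightarrow> ('v \<times> 'v) set \<Rightarrow> ('v list \<Rightarrow> 'k::field) set" where
  "relB V lev E =
     {tmon [v, w] | v w. v \<in> Vplus V lev \<and> w \<in> Vplus V lev \<and> (v, w) \<notin> E} \<union>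
     {(\<lambda>u. case u of [a, b] \<Rightarrow> (if a = v \<and> b \<in> succs E v then 1 else 0) | _ \<Rightarrow> 0)
        | v. v \<in> V \<and> 2 \<le> lev v}"

definition RB :: "'v set \<Rightarrow> ('v \<Rightarrow> nat) \<Rightarrow> ('v \<times> 'v) set \<Rightarrow> ('v list \<Rightarrow> 'k::field) set" where
  "RB V lev E = ideal_gen (Vplus V lev) (relB V lev E)"

text \<open>B_n = span V_n, the bidegree (1,n) part (the ideal R_B has no component of
  word length 1, so B_n is represented faithfully by linear combinations of the
  one-letter words [v], v in V_n).\<close>
definition Bdeg :: "'v set \<Rightarrow> ('v \<Rightarrow> nat) \<Rightarrow> nat \<Rightarrow> ('v list \<Rightarrow> 'k::field) set" where
  "Bdeg V lev n = {x \<in> tensor_alg (Vplus V lev). hom_bideg lev 1 n x}"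

definition kappa :: "'v set \<Rightarrow> ('v \<Rightarrow> nat) \<Rightarrow> ('v \<times> 'v) set \<Rightarrow> nat \<Rightarrow> ('v list \<Rightarrow> 'k::field)
                      \<Rightarrow> ('v list \<Rightarrow> 'k) set" where
  "kappa V lev E n a = {b \<in> Bdeg V lev (n - 1). tmul a b \<in> RB V lev E}"

definition lin_span :: "('v list \<Rightarrow> 'k::field) set \<Rightarrow> ('v list \<Rightarrow> 'k) set" where
  "lin_span L = {(\<lambda>w. \<Sum>l\<in>F. c l * l w) | F c. finite F \<and> F \<subseteq> L}"

definition lin_indep :: "('v list \<Rightarrow> 'k::field) set \<Rightarrow> bool" where
  "lin_indep L \<longleftrightarrow>
     (\<forall>F c. finite F \<and> F \<subseteq> L \<and> (\<lambda>w. \<Sum>l\<in>F. c l * l w) = tzero \<longrightarrow> (\<forall>l \<in> F. c l = 0))"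

definition is_basis_of :: "('v list \<Rightarrow> 'k::field) set \<Rightarrow> ('v list \<Rightarrow> 'k) set \<Rightarrow> bool" where
  "is_basis_of L S \<longleftrightarrow> L \<subseteq> S \<and> lin_indep L \<and> S \<subseteq> lin_span L"

text \<open>A map on the quotient T(A)/I is represented by a map phi on representatives
  that respects congruence modulo I.\<close>
definition graded_alg_aut :: "'v set \<Rightarrow> ('v \<Rightarrow> nat) \<Rightarrow> ('v list \<Rightarrow> 'k::field) set
      \<Rightarrow> (('v list \<Rightarrow> 'k) \<Rightarrow> ('v list \<Rightarrow> 'k)) \<Rightarrow> bool" where
  "graded_alg_aut A lev I \<phi> \<longleftrightarrow>
     (\<forall>x \<in> tensor_alg A. \<phi> x \<in> tensor_alg A) \<and>
     (\<forall>x \<in> tensor_alg A. \<forall>y \<in> tensor_alg A. tsub x y \<in> I \<longrightarrow> tsub (\<phi> x) (\<phi> y) \<in> I) \<and>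
     (\<forall>x \<in> tensor_alg A. \<forall>y \<in> tensor_alg A. tsub (\<phi> (tadd x y)) (tadd (\<phi> x) (\<phi> y)) \<in> I) \<and>
     (\<forall>c. \<forall>x \<in> tensor_alg A. tsub (\<phi> (tscale c x)) (tscale c (\<phi> x)) \<in> I) \<and>
     (\<forall>x \<in> tensor_alg A. \<forall>y \<in> tensor_alg A. tsub (\<phi> (tmul x y)) (tmul (\<phi> x) (\<phi> y)) \<in> I) \<and>
     tsub (\<phi> (tmon [])) (tmon []) \<in> I \<and>
     (\<forall>x \<in> tensor_alg A. \<forall>y \<in> tensor_alg A. tsub (\<phi> x) (\<phi> y) \<in> I \<longrightarrow> tsub x y \<in> I) \<and>
     (\<forall>y \<in> tensor_alg A. \<exists>x \<in> tensor_alg A. tsub (\<phi> x) y \<in> I) \<and>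
     (\<forall>m d. \<forall>x \<in> tensor_alg A. hom_bideg lev m d x \<longrightarrow>
        (\<exists>y \<in> tensor_alg A. hom_bideg lev m d y \<and> tsub (\<phi> x) y \<in> I))"

definition upper_vertex_like :: "'v set \<Rightarrow> ('v \<Rightarrow> nat) \<Rightarrow> ('v \<times> 'v) set \<Rightarrow> nat
      \<Rightarrow> ('v list \<Rightarrow> 'k::field) set \<Rightarrow> bool" where
  "upper_vertex_like V lev E n L \<longleftrightarrow>
     (let Vn = restrV V lev n; En = restrE V lev E n;
          A = Vplus Vn lev; I = (RB Vn lev En :: ('v list \<Rightarrow> 'k) set) in
      \<exists>\<phi>. graded_alg_aut A lev I \<phi> \<and>
        (\<forall>v \<in> V. 1 \<le> lev v \<and> lev v \<le> n - 1 \<longrightarrow> tsub (\<phi> (tmon [v])) (tmon [v]) \<in> I) \<and>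
        (\<forall>v \<in> lay V lev n. \<exists>l \<in> L. tsub (\<phi> (tmon [v])) l \<in> I) \<and>
        (\<forall>l \<in> L. \<exists>v \<in> lay V lev n. tsub (\<phi> (tmon [v])) l \<in> I))"

end

theory Submission
  imports Defs "HOL-Library.Function_Algebras" "HOL.Vector_Spaces"
begin


definition sc :: "'k::field \<Rightarrow> ('v list \<Rightarrow> 'k) \<Rightarrow> ('v list \<Rightarrow> 'k)" where
  "sc c x = (\<lambda>w. c * x w)"

interpretation VS: vector_space "sc :: 'k::field \<Rightarrow> ('v list \<Rightarrow> 'k) \<Rightarrow> _"
  by unfold_locales (auto simp: sc_def fun_eq_iff algebra_simps)

lemma sum_fun_apply: "(\<Sum>x\<in>F. f x) w = (\<Sum>x\<in>F. f x w)"
  by (induction F rule: infinite_finite_induct) auto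

lemma lin_span_eq: "lin_span L = VS.span L"
  unfolding lin_span_def VS.span_explicit by (auto simp: sc_def sum_fun_apply fun_eq_iff)

lemma lin_indep_eq: "lin_indep L \<longleftrightarrow> VS.independent L"
  unfolding lin_indep_def VS.independent_explicit_module
  by (auto simp: sc_def sum_fun_apply fun_eq_iff tzero_def)

lemma steinitz:
  assumes "finite X" "lin_indep Y" "Y \<subseteq> lin_span X" "card Y = card X"
  shows "X \<subseteq> lin_span Y"
proof (rule ccontr)
  assume "\<not> X \<subseteq> lin_span Y"
  then obtain x where x: "x \<in> X" "x \<notin> VS.span Y" by (auto simp: lin_span_eq)
  have ind: "VS.independent (insert x Y)"
    using assms(2) x(2) by (simp add: lin_indep_eq VS.independent_insertI)
  have "insert x Y \<subseteq> VS.span X" using assms(3) x(1) by (auto simp: lin_span_eq intro: VS.span_base)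
  from VS.independent_span_bound[OF assms(1) ind this]
  have "finite (insert x Y)" "card (insert x Y) \<le> card X" by auto
  moreover have "x \<notin> Y" using x(2) VS.span_base by blast
  ultimately show False using assms(4) by simp
qed



section \<open>Tensor algebra basics\<close>

lemma tmul_apply: "tmul x y w = (\<Sum>i\<le>length w. x (take i w) * y (drop i w))"
  by (simp add: tmul_def)

lemma tensor_algI:
  "finite {w. x w \<noteq> 0} \<Longrightarrow> (\<And>w. x w \<noteq> 0 \<Longrightarrow> set w \<subseteq> A) \<Longrightarrow> x \<in> tensor_alg A"
  by (auto simp: tensor_alg_def)

lemma tensor_algD:
  "x \<in> tensor_alg A \<Longrightarrow> finite {w. x w \<noteq> 0}"
  "x \<in> tensor_alg A \<Longrightarrow> x w \<noteq> 0 \<Longrightarrow> set w \<subseteq> A"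
  by (auto simp: tensor_alg_def)

lemma tzero_T: "tzero \<in> tensor_alg A"
  by (auto simp: tensor_alg_def tzero_def)

lemma tadd_T: "x \<in> tensor_alg A \<Longrightarrow> y \<in> tensor_alg A \<Longrightarrow> tadd x y \<in> tensor_alg A"
proof (rule tensor_algI)
  assume x: "x \<in> tensor_alg A" and y: "y \<in> tensor_alg A"
  have "{w. tadd x y w \<noteq> 0} \<subseteq> {w. x w \<noteq> 0} \<union> {w. y w \<noteq> 0}" by (auto simp: tadd_def)
  then show "finite {w. tadd x y w \<noteq> 0}" using x y by (auto intro: finite_subset dest: tensor_algD)
  fix w assume "tadd x y w \<noteq> 0"
  then have "x w \<noteq> 0 \<or> y w \<noteq> 0" by (auto simp: tadd_def)
  then show "set w \<subseteq> A" using x y by (auto dest: tensor_algD)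
qed

lemma tscale_T: "x \<in> tensor_alg A \<Longrightarrow> tscale c x \<in> tensor_alg A"
  unfolding tensor_alg_def tscale_def
  by (auto intro: finite_subset[of _ "{w. x w \<noteq> 0}"])

lemma tsub_T: "x \<in> tensor_alg A \<Longrightarrow> y \<in> tensor_alg A \<Longrightarrow> tsub x y \<in> tensor_alg A"
proof (rule tensor_algI)
  assume x: "x \<in> tensor_alg A" and y: "y \<in> tensor_alg A"
  have "{w. tsub x y w \<noteq> 0} \<subseteq> {w. x w \<noteq> 0} \<union> {w. y w \<noteq> 0}" by (auto simp: tsub_def)
  then show "finite {w. tsub x y w \<noteq> 0}" using x y by (auto intro: finite_subset dest: tensor_algD)
  fix w assume "tsub x y w \<noteq> 0"
  then have "x w \<noteq> 0 \<or> y w \<noteq> 0" by (auto simp: tsub_def)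
  then show "set w \<subseteq> A" using x y by (auto dest: tensor_algD)
qed

lemma tmul_nz: "tmul x y w \<noteq> 0 \<Longrightarrow> \<exists>i\<le>length w. x (take i w) \<noteq> 0 \<and> y (drop i w) \<noteq> 0"
  unfolding tmul_def by (metis (no_types, lifting) atMost_iff mult_eq_0_iff sum.neutral)

lemma tmul_T: "x \<in> tensor_alg A \<Longrightarrow> y \<in> tensor_alg A \<Longrightarrow> tmul x y \<in> tensor_alg A"
proof (rule tensor_algI)
  assume x: "x \<in> tensor_alg A" and y: "y \<in> tensor_alg A"
  have "{w. tmul x y w \<noteq> 0} \<subseteq> (\<lambda>(a,b). a @ b) ` ({w. x w \<noteq> 0} \<times> {w. y w \<noteq> 0})"
  proof
    fix w assume "w \<in> {w. tmul x y w \<noteq> 0}"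
    then obtain i where "x (take i w) \<noteq> 0" "y (drop i w) \<noteq> 0" using tmul_nz by blast
    then show "w \<in> (\<lambda>(a,b). a @ b) ` ({w. x w \<noteq> 0} \<times> {w. y w \<noteq> 0})"
      by (auto intro!: image_eqI[of _ _ "(take i w, drop i w)"])
  qed
  moreover have "finite ((\<lambda>(a,b). a @ b) ` ({w. x w \<noteq> 0} \<times> {w. y w \<noteq> 0}))"
    using x y by (auto dest: tensor_algD)
  ultimately show "finite {w. tmul x y w \<noteq> 0}" by (rule finite_subset)
  fix w assume "tmul x y w \<noteq> 0"
  then obtain i where "x (take i w) \<noteq> 0" "y (drop i w) \<noteq> 0" using tmul_nz by blast
  then have "set (take i w) \<subseteq> A" "set (drop i w) \<subseteq> A" using x y by (auto dest: tensor_algD)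
  then show "set w \<subseteq> A"
    by (metis append_take_drop_id le_sup_iff set_append)
qed

lemma tmon_T: "set w \<subseteq> A \<Longrightarrow> tmon w \<in> tensor_alg A"
  by (auto simp: tensor_alg_def tmon_def)

lemma tensor_alg_mono: "A \<subseteq> B \<Longrightarrow> tensor_alg A \<subseteq> tensor_alg B"
  by (auto simp: tensor_alg_def)

lemma tmul_tadd_left: "tmul (tadd x y) z = tadd (tmul x z) (tmul y z)"
  by (simp add: tmul_def tadd_def algebra_simps sum.distrib fun_eq_iff)
lemma tmul_tadd_right: "tmul z (tadd x y) = tadd (tmul z x) (tmul z y)"
  by (simp add: tmul_def tadd_def algebra_simps sum.distrib fun_eq_iff)
lemma tmul_tsub_left: "tmul (tsub x y) z = tsub (tmul x z) (tmul y z)"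
  by (simp add: tmul_def tsub_def algebra_simps sum_subtractf fun_eq_iff)
lemma tmul_tsub_right: "tmul z (tsub x y) = tsub (tmul z x) (tmul z y)"
  by (simp add: tmul_def tsub_def algebra_simps sum_subtractf fun_eq_iff)
lemma tmul_tscale_left: "tmul (tscale c x) z = tscale c (tmul x z)"
  by (simp add: tmul_def tscale_def algebra_simps sum_distrib_left fun_eq_iff)
lemma tmul_tscale_right: "tmul z (tscale c x) = tscale c (tmul z x)"
  by (simp add: tmul_def tscale_def algebra_simps sum_distrib_left fun_eq_iff)

section \<open>Ideals\<close>

lemma T_ideal: "is_two_sided_ideal A (tensor_alg A)"
  by (auto simp: is_two_sided_ideal_def tzero_T tadd_T tscale_T tmul_T)

lemma ideal_gen_base: "G \<subseteq> ideal_gen A G"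
  by (auto simp: ideal_gen_def)

lemma ideal_gen_min: "is_two_sided_ideal A J \<Longrightarrow> G \<subseteq> J \<Longrightarrow> ideal_gen A G \<subseteq> J"
  by (auto simp: ideal_gen_def)

context fixes A :: "'v set" and I :: "('v list \<Rightarrow> 'k::field) set"
  assumes I: "is_two_sided_ideal A I"
begin
lemma idT: "x \<in> I \<Longrightarrow> x \<in> tensor_alg A" using I by (auto simp: is_two_sided_ideal_def)
lemma id0: "tzero \<in> I" using I by (auto simp: is_two_sided_ideal_def)
lemma idadd: "x \<in> I \<Longrightarrow> y \<in> I \<Longrightarrow> tadd x y \<in> I" using I by (auto simp: is_two_sided_ideal_def)
lemma idscale: "x \<in> I \<Longrightarrow> tscale c x \<in> I" using I by (auto simp: is_two_sided_ideal_def)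
lemma idmull: "a \<in> tensor_alg A \<Longrightarrow> x \<in> I \<Longrightarrow> tmul a x \<in> I" using I by (auto simp: is_two_sided_ideal_def)
lemma idmulr: "a \<in> tensor_alg A \<Longrightarrow> x \<in> I \<Longrightarrow> tmul x a \<in> I" using I by (auto simp: is_two_sided_ideal_def)
lemma idsub: "x \<in> I \<Longrightarrow> y \<in> I \<Longrightarrow> tsub x y \<in> I"
proof -
  assume "x \<in> I" "y \<in> I"
  then have "tadd x (tscale (-1) y) \<in> I" by (intro idadd idscale)
  moreover have "tadd x (tscale (-1) y) = tsub x y" by (simp add: tadd_def tscale_def tsub_def fun_eq_iff)
  ultimately show ?thesis by simp
qed
lemma idsum: "finite S \<Longrightarrow> (\<And>u. u \<in> S \<Longrightarrow> f u \<in> I) \<Longrightarrow> (\<lambda>w. \<Sum>u\<in>S. f u w) \<in> I"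
proof (induction S rule: finite_induct)
  case empty then show ?case using id0 by (simp add: tzero_def)
next
  case (insert a S)
  then have "tadd (f a) (\<lambda>w. \<Sum>u\<in>S. f u w) \<in> I" by (intro idadd) auto
  then show ?case using insert by (simp add: tadd_def)
qed
lemma idneg: "x \<in> I \<Longrightarrow> tsub tzero x \<in> I" using idsub id0 by blast
lemma idscale_inv: "tscale c x \<in> I \<Longrightarrow> c \<noteq> 0 \<Longrightarrow> x \<in> I"
proof -
  assume "tscale c x \<in> I" "c \<noteq> 0"
  then have "tscale (inverse c) (tscale c x) \<in> I" using idscale by blast
  moreover have "tscale (inverse c) (tscale c x) = x" using \<open>c \<noteq> 0\<close> by (simp add: tscale_def mult.assoc[symmetric])
  ultimately show ?thesis by simp
qed
lemma idcongr: "x \<in> I \<Longrightarrow> x = y \<Longrightarrow> y \<in> I" by simp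
end

lemma ideal_gen_ideal:
  fixes G :: "('v list \<Rightarrow> 'k::field) set"
  assumes "G \<subseteq> tensor_alg A" shows "is_two_sided_ideal A (ideal_gen A G)"
proof -
  let ?F = "{I. is_two_sided_ideal A I \<and> G \<subseteq> I}"
  have ne: "tensor_alg A \<in> ?F" using T_ideal assms by blast
  have 1: "\<Inter>?F \<subseteq> tensor_alg A" using ne by blast
  have 2: "tzero \<in> \<Inter>?F"
  proof (rule InterI)
    fix I assume "I \<in> ?F" then show "tzero \<in> I" by (simp add: is_two_sided_ideal_def)
  qed
  have 3: "\<forall>x \<in> \<Inter>?F. \<forall>y \<in> \<Inter>?F. tadd x y \<in> \<Inter>?F"
  proof (intro ballI InterI)
    fix x y I assume "x \<in> \<Inter>?F" "y \<in> \<Inter>?F" "I \<in> ?F"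
    then have "is_two_sided_ideal A I" "x \<in> I" "y \<in> I" by blast+
    then show "tadd x y \<in> I" by (rule idadd)
  qed
  have 4: "\<forall>c. \<forall>x \<in> \<Inter>?F. tscale c x \<in> \<Inter>?F"
  proof (intro allI ballI InterI)
    fix c x I assume "x \<in> \<Inter>?F" "I \<in> ?F"
    then have "is_two_sided_ideal A I" "x \<in> I" by blast+
    then show "tscale c x \<in> I" by (rule idscale)
  qed
  have 5: "\<forall>a \<in> tensor_alg A. \<forall>x \<in> \<Inter>?F. tmul a x \<in> \<Inter>?F \<and> tmul x a \<in> \<Inter>?F"
  proof (intro ballI conjI InterI)
    fix a :: "'v list \<Rightarrow> 'k" and x I assume "a \<in> tensor_alg A" "x \<in> \<Inter>?F" "I \<in> ?F"
    then have "is_two_sided_ideal A I" "x \<in> I" "a \<in> tensor_alg A" by blast+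
    then show "tmul a x \<in> I" "tmul x a \<in> I" using idmull[of A I a x] idmulr[of A I a x] by blast+
  qed
  have eq: "ideal_gen A G = \<Inter>?F" by (simp add: ideal_gen_def)
  show ?thesis unfolding eq apply (subst is_two_sided_ideal_def) using 1 2 3 4 5 by blast
qed

lemma tsub_trans: "is_two_sided_ideal A I \<Longrightarrow> tsub x y \<in> I \<Longrightarrow> tsub y z \<in> I \<Longrightarrow> tsub x z \<in> I"
proof -
  assume I: "is_two_sided_ideal A I" and "tsub x y \<in> I" "tsub y z \<in> I"
  then have "tadd (tsub x y) (tsub y z) \<in> I" by (rule idadd)
  moreover have "tadd (tsub x y) (tsub y z) = tsub x z" by (simp add: tadd_def tsub_def fun_eq_iff)
  ultimately show ?thesis by simp
qed

lemma tsub_sym: "is_two_sided_ideal A I \<Longrightarrow> tsub x y \<in> I \<Longrightarrow> tsub y x \<in> I"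
proof -
  assume I: "is_two_sided_ideal A I" and "tsub x y \<in> I"
  then have "tscale (-1) (tsub x y) \<in> I" by (rule idscale)
  moreover have "tscale (-1) (tsub x y) = tsub y x" by (simp add: tscale_def tsub_def fun_eq_iff)
  ultimately show ?thesis by simp
qed

lemma tsub_refl: "is_two_sided_ideal A I \<Longrightarrow> tsub x x \<in> I"
proof -
  assume I: "is_two_sided_ideal A I"
  have "tsub x x = tzero" by (simp add: tsub_def tzero_def)
  then show ?thesis using id0[OF I] by simp
qed

lemma tsub_eq0: "tsub x y = tzero \<longleftrightarrow> x = y"
  by (auto simp: tsub_def tzero_def fun_eq_iff)

lemma tsub_tadd: "is_two_sided_ideal A I \<Longrightarrow> tsub x x' \<in> I \<Longrightarrow> tsub y y' \<in> I \<Longrightarrow> tsub (tadd x y) (tadd x' y') \<in> I"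
proof -
  assume I: "is_two_sided_ideal A I" and "tsub x x' \<in> I" "tsub y y' \<in> I"
  then have "tadd (tsub x x') (tsub y y') \<in> I" by (rule idadd)
  moreover have "tadd (tsub x x') (tsub y y') = tsub (tadd x y) (tadd x' y')" by (simp add: tadd_def tsub_def fun_eq_iff)
  ultimately show ?thesis by simp
qed

lemma tsub_tscale: "is_two_sided_ideal A I \<Longrightarrow> tsub x x' \<in> I \<Longrightarrow> tsub (tscale c x) (tscale c x') \<in> I"
proof -
  assume I: "is_two_sided_ideal A I" and "tsub x x' \<in> I"
  then have "tscale c (tsub x x') \<in> I" by (rule idscale)
  moreover have "tscale c (tsub x x') = tsub (tscale c x) (tscale c x')" by (simp add: tscale_def tsub_def fun_eq_iff algebra_simps)
  ultimately show ?thesis by simp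
qed

lemma tsub_tmul: "is_two_sided_ideal A I \<Longrightarrow> x \<in> tensor_alg A \<Longrightarrow> x' \<in> tensor_alg A \<Longrightarrow>
   y \<in> tensor_alg A \<Longrightarrow> y' \<in> tensor_alg A \<Longrightarrow>
   tsub x x' \<in> I \<Longrightarrow> tsub y y' \<in> I \<Longrightarrow> tsub (tmul x y) (tmul x' y') \<in> I"
proof -
  assume I: "is_two_sided_ideal A I" and T: "x \<in> tensor_alg A" "x' \<in> tensor_alg A"
    "y \<in> tensor_alg A" "y' \<in> tensor_alg A" and "tsub x x' \<in> I" "tsub y y' \<in> I"
  then have "tadd (tmul (tsub x x') y) (tmul x' (tsub y y')) \<in> I"
    by (intro idadd[OF I] idmulr[OF I] idmull[OF I])
  moreover have "tadd (tmul (tsub x x') y) (tmul x' (tsub y y')) = tsub (tmul x y) (tmul x' y')"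
    by (simp only: tmul_tsub_left tmul_tsub_right) (simp add: tadd_def tsub_def fun_eq_iff)
  ultimately show ?thesis by simp
qed

definition rst :: "'v list set \<Rightarrow> ('v list \<Rightarrow> 'k::field) \<Rightarrow> 'v list \<Rightarrow> 'k" where
  "rst S x = (\<lambda>w. if w \<in> S then x w else 0)"

definition low0 :: "('v list \<Rightarrow> 'k::field) \<Rightarrow> bool" where
  "low0 x \<longleftrightarrow> (\<forall>w. length w \<le> 1 \<longrightarrow> x w = 0)"


lemma tmul_len2_left: "low0 x \<Longrightarrow> length w = 2 \<Longrightarrow> tmul a x w = a [] * x w"
proof -
  assume l: "low0 x" "length w = 2"
  then obtain p q where w: "w = [p, q]"
    by (auto simp: length_Suc_conv numeral_2_eq_2)
  have "x [q] = 0" "x [] = 0" using l(1) by (auto simp: low0_def)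
  then show ?thesis by (simp add: tmul_def w atMost_Suc)
qed

lemma tmul_len2_right: "low0 x \<Longrightarrow> length w = 2 \<Longrightarrow> tmul x a w = x w * a []"
proof -
  assume l: "low0 x" "length w = 2"
  then obtain p q where w: "w = [p, q]"
    by (auto simp: length_Suc_conv numeral_2_eq_2)
  have "x [p] = 0" "x [] = 0" using l(1) by (auto simp: low0_def)
  then show ?thesis by (simp add: tmul_def w atMost_Suc)
qed

lemma tmul_low0_left: "low0 x \<Longrightarrow> low0 (tmul a x)"
proof -
  assume l: "low0 x"
  show ?thesis unfolding low0_def tmul_def
  proof (intro allI impI sum.neutral ballI)
    fix w :: "'a list" and i assume "length w \<le> 1" "i \<in> {..length w}"
    then have "length (drop i w) \<le> 1" by simp
    then show "a (take i w) * x (drop i w) = 0" using l by (simp add: low0_def)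
  qed
qed

lemma tmul_low0_right: "low0 x \<Longrightarrow> low0 (tmul x a)"
proof -
  assume l: "low0 x"
  show ?thesis unfolding low0_def tmul_def
  proof (intro allI impI sum.neutral ballI)
    fix w :: "'a list" and i assume "length w \<le> 1" "i \<in> {..length w}"
    then have "length (take i w) \<le> 1" by simp
    then show "x (take i w) * a (drop i w) = 0" using l by (simp add: low0_def)
  qed
qed

lemma restr_ideal:
  fixes G :: "('v list \<Rightarrow> 'k::field) set"
  assumes G: "G \<subseteq> tensor_alg A" and Glow: "\<forall>g\<in>G. low0 g"
    and I': "is_two_sided_ideal A' I'"
    and S: "\<forall>w\<in>S. length w = 2"
    and GS: "\<forall>g\<in>G. rst S g \<in> I'"
    and x: "x \<in> ideal_gen A G"
  shows "low0 x \<and> rst S x \<in> I'"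
proof -
  let ?J = "{x \<in> tensor_alg A. low0 x \<and> rst S x \<in> I'}"
  have "is_two_sided_ideal A ?J"
    unfolding is_two_sided_ideal_def
  proof (intro conjI ballI allI)
    show "?J \<subseteq> tensor_alg A" by blast
    show "tzero \<in> ?J" using id0[OF I'] tzero_T
      by (auto simp: low0_def tzero_def rst_def)
    fix x assume x: "x \<in> ?J"
    {
      fix y assume y: "y \<in> ?J"
      have "rst S (tadd x y) = tadd (rst S x) (rst S y)" by (auto simp: rst_def tadd_def)
      then show "tadd x y \<in> ?J" using x y idadd[OF I'] tadd_T by (auto simp: low0_def tadd_def)
    }
    fix c
    have "rst S (tscale c x) = tscale c (rst S x)" by (auto simp: rst_def tscale_def)
    then show "tscale c x \<in> ?J" using x idscale[OF I'] tscale_T by (auto simp: low0_def tscale_def)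
  next
    fix a :: "'v list \<Rightarrow> 'k" and x assume a: "a \<in> tensor_alg A" and x: "x \<in> ?J"
    have "rst S (tmul a x) = tscale (a []) (rst S x)"
      using x S by (auto simp: rst_def tscale_def tmul_len2_left fun_eq_iff)
    moreover have "rst S (tmul x a) = tscale (a []) (rst S x)"
      using x S by (auto simp: rst_def tscale_def tmul_len2_right fun_eq_iff)
    ultimately show "tmul a x \<in> ?J" "tmul x a \<in> ?J"
      using x a idscale[OF I'] tmul_T tmul_low0_left tmul_low0_right by auto
  qed
  moreover have "G \<subseteq> ?J" using G Glow GS by blast
  ultimately have "ideal_gen A G \<subseteq> ?J" by (rule ideal_gen_min)
  then show ?thesis using x by blast
qed




section \<open>Letter-substitution homomorphisms\<close>

definition Wd :: "'v set \<Rightarrow> nat \<Rightarrow> 'v list set" where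
  "Wd A m = {w. set w \<subseteq> A \<and> length w = m}"

lemma finite_Wd: "finite A \<Longrightarrow> finite (Wd A m)"
  unfolding Wd_def by (rule finite_lists_length_eq)

fun Kf :: "('v \<Rightarrow> 'v \<Rightarrow> 'k::field) \<Rightarrow> 'v list \<Rightarrow> 'v list \<Rightarrow> 'k" where
  "Kf M (a # as) (b # bs) = M a b * Kf M as bs"
| "Kf M _ _ = 1"

lemma Kf_split:
  "length a = length w \<Longrightarrow> Kf M a w = Kf M (take i a) (take i w) * Kf M (drop i a) (drop i w)"
proof (induction a arbitrary: w i)
  case Nil then show ?case by simp
next
  case (Cons x a)
  then obtain y w' where w: "w = y # w'" by (cases w) auto
  show ?case using Cons w by (cases i) auto
qed

lemma Kf_nz: "Kf M a w \<noteq> 0 \<Longrightarrow> length a = length w \<Longrightarrow> i < length w \<Longrightarrow> M (a ! i) (w ! i) \<noteq> 0"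
proof (induction a arbitrary: w i)
  case Nil then show ?case by simp
next
  case (Cons x a)
  then obtain y w' where w: "w = y # w'" by (cases w) auto
  show ?case using Cons w by (cases i) auto
qed

lemma Kf_id: "(\<forall>p\<in>set a. \<forall>q. M p q = (if p = q then 1 else 0)) \<Longrightarrow> length a = length w \<Longrightarrow>
   Kf M a w = (if a = w then 1 else 0)"
proof (induction a arbitrary: w)
  case Nil then show ?case by simp
next
  case (Cons x a)
  then obtain y w' where w: "w = y # w'" by (cases w) auto
  show ?case using Cons w by auto
qed

definition subst :: "'v set \<Rightarrow> ('v \<Rightarrow> 'v \<Rightarrow> 'k::field) \<Rightarrow> ('v list \<Rightarrow> 'k) \<Rightarrow> 'v list \<Rightarrow> 'k" where
  "subst A M x = (\<lambda>w. \<Sum>a\<in>Wd A (length w). x a * Kf M a w)"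

lemma subst_tadd: "subst A M (tadd x y) = tadd (subst A M x) (subst A M y)"
  by (simp add: subst_def tadd_def fun_eq_iff algebra_simps sum.distrib)
lemma subst_tsub: "subst A M (tsub x y) = tsub (subst A M x) (subst A M y)"
  by (simp add: subst_def tsub_def fun_eq_iff algebra_simps sum_subtractf)
lemma subst_tscale: "subst A M (tscale c x) = tscale c (subst A M x)"
  by (simp add: subst_def tscale_def fun_eq_iff algebra_simps sum_distrib_left)
lemma subst_tzero: "subst A M tzero = tzero"
  by (simp add: subst_def tzero_def fun_eq_iff)

lemma subst_sum: "finite S \<Longrightarrow> subst A M (\<lambda>w. \<Sum>u\<in>S. c u * f u w) = (\<lambda>w. \<Sum>u\<in>S. c u * subst A M (f u) w)"
  by (simp add: subst_def fun_eq_iff sum_distrib_left sum_distrib_right mult.assoc sum.swap[of _ S])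

lemma subst_tmon: "finite A \<Longrightarrow> set u \<subseteq> A \<Longrightarrow> subst A M (tmon u) w = (if length w = length u then Kf M u w else 0)"
proof -
  assume A: "finite A" and u: "set u \<subseteq> A"
  have "subst A M (tmon u) w = (\<Sum>a\<in>Wd A (length w). (if a = u then Kf M a w else 0))"
    unfolding subst_def tmon_def by (intro sum.cong refl) auto
  also have "\<dots> = (if u \<in> Wd A (length w) then Kf M u w else 0)"
    by (rule sum.delta[OF finite_Wd[OF A]])
  finally show ?thesis using u by (auto simp: Wd_def)
qed

lemma subst_tmon_nil: "finite A \<Longrightarrow> subst A M (tmon []) = tmon []"
proof
  fix w :: "'a list"
  assume A: "finite A"
  have "subst A M (tmon []) w = (if length w = 0 then Kf M [] w else 0)" using subst_tmon[OF A, of "[]" M w] by simp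
  then show "subst A M (tmon []) w = tmon [] w" by (cases w) (auto simp: tmon_def)
qed

lemma subst_tmon1: "finite A \<Longrightarrow> v \<in> A \<Longrightarrow> subst A M (tmon [v]) = (\<lambda>w. case w of [q] \<Rightarrow> M v q | _ \<Rightarrow> 0)"
proof
  fix w assume "finite A" "v \<in> A"
  then show "subst A M (tmon [v]) w = (case w of [q] \<Rightarrow> M v q | _ \<Rightarrow> 0)"
    by (cases w rule: remdups_adj.cases) (auto simp: subst_tmon)
qed

lemma subst_mul:
  assumes A: "finite A"
  shows "subst A M (tmul x y) = tmul (subst A M x) (subst A M y)"
proof
  fix w :: "'a list"
  define m where "m = length w"
  have L: "subst A M (tmul x y) w = (\<Sum>i\<le>m. \<Sum>c\<in>Wd A m. x (take i c) * y (drop i c) * Kf M c w)"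
  proof -
    have "subst A M (tmul x y) w = (\<Sum>c\<in>Wd A m. \<Sum>i\<le>m. x (take i c) * y (drop i c) * Kf M c w)"
      unfolding subst_def m_def tmul_def
      by (intro sum.cong refl) (auto simp: Wd_def sum_distrib_right)
    also have "\<dots> = (\<Sum>i\<le>m. \<Sum>c\<in>Wd A m. x (take i c) * y (drop i c) * Kf M c w)"
      by (rule sum.swap)
    finally show ?thesis .
  qed
  have R: "tmul (subst A M x) (subst A M y) w =
     (\<Sum>i\<le>m. \<Sum>p\<in>Wd A i \<times> Wd A (m - i). x (fst p) * Kf M (fst p) (take i w) * (y (snd p) * Kf M (snd p) (drop i w)))"
    unfolding tmul_def subst_def m_def
    by (intro sum.cong refl) (simp add: sum_product sum.cartesian_product case_prod_unfold min_def)
  have "(\<Sum>c\<in>Wd A m. x (take i c) * y (drop i c) * Kf M c w) =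
        (\<Sum>p\<in>Wd A i \<times> Wd A (m - i). x (fst p) * Kf M (fst p) (take i w) * (y (snd p) * Kf M (snd p) (drop i w)))"
    if i: "i \<le> m" for i
  proof (rule sum.reindex_bij_witness[where i = "\<lambda>p. fst p @ snd p" and j = "\<lambda>c. (take i c, drop i c)"])
    fix c assume c: "c \<in> Wd A m"
    show "fst (take i c, drop i c) @ snd (take i c, drop i c) = c" by simp
    show "(take i c, drop i c) \<in> Wd A i \<times> Wd A (m - i)"
      using c i by (auto simp: Wd_def dest: in_set_takeD in_set_dropD)
    have "Kf M c w = Kf M (take i c) (take i w) * Kf M (drop i c) (drop i w)"
      using c by (intro Kf_split) (auto simp: Wd_def m_def)
    then show "x (fst (take i c, drop i c)) * Kf M (fst (take i c, drop i c)) (take i w) *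
          (y (snd (take i c, drop i c)) * Kf M (snd (take i c, drop i c)) (drop i w)) =
          x (take i c) * y (drop i c) * Kf M c w" by simp
  next
    fix p assume p: "p \<in> Wd A i \<times> Wd A (m - i)"
    then show "(take i (fst p @ snd p), drop i (fst p @ snd p)) = p"
      by (auto simp: Wd_def)
    show "fst p @ snd p \<in> Wd A m" using p i by (auto simp: Wd_def)
  qed
  then show "subst A M (tmul x y) w = tmul (subst A M x) (subst A M y) w"
    unfolding L R by (intro sum.cong refl) auto
qed

lemma subst_nz:
  assumes "subst A M x w \<noteq> 0"
  shows "\<exists>a. set a \<subseteq> A \<and> length a = length w \<and> x a \<noteq> 0 \<and> Kf M a w \<noteq> 0"
proof (rule ccontr)
  assume "\<not> ?thesis"
  then have "\<forall>a\<in>Wd A (length w). x a * Kf M a w = 0" by (auto simp: Wd_def)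
  then have "(\<Sum>a\<in>Wd A (length w). x a * Kf M a w) = 0" by (intro sum.neutral) auto
  then show False using assms by (simp add: subst_def)
qed

lemma subst_T:
  assumes A: "finite A" and MA: "\<forall>p\<in>A. \<forall>q. M p q \<noteq> 0 \<longrightarrow> q \<in> A"
    and x: "x \<in> tensor_alg A"
  shows "subst A M x \<in> tensor_alg A"
proof (rule tensor_algI)
  have letters: "set w \<subseteq> A" if nz: "subst A M x w \<noteq> 0" for w
  proof
    fix q assume "q \<in> set w"
    then obtain i where i: "i < length w" "w ! i = q" by (auto simp: in_set_conv_nth)
    obtain a where a: "set a \<subseteq> A" "length a = length w" "x a \<noteq> 0" "Kf M a w \<noteq> 0"
      using subst_nz[OF nz] by blast
    have "M (a ! i) (w ! i) \<noteq> 0" using Kf_nz[OF a(4) a(2) i(1)] .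
    moreover have "a ! i \<in> A" using a(1,2) i(1) by auto
    ultimately show "q \<in> A" using MA i(2) by blast
  qed
  have "{w. subst A M x w \<noteq> 0} \<subseteq> (\<Union>a\<in>{a. x a \<noteq> 0}. Wd A (length a))"
  proof
    fix w assume w: "w \<in> {w. subst A M x w \<noteq> 0}"
    then obtain a where a: "length a = length w" "x a \<noteq> 0" using subst_nz by blast
    then show "w \<in> (\<Union>a\<in>{a. x a \<noteq> 0}. Wd A (length a))" using letters w by (auto simp: Wd_def)
  qed
  moreover have "finite (\<Union>a\<in>{a. x a \<noteq> 0}. Wd A (length a))"
    using x A by (auto dest: tensor_algD intro: finite_Wd)
  ultimately show "finite {w. subst A M x w \<noteq> 0}" by (rule finite_subset)
  fix w assume "subst A M x w \<noteq> 0" then show "set w \<subseteq> A" by (rule letters)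
qed

lemma subst_graded:
  assumes Ml: "\<forall>p\<in>A. \<forall>q. M p q \<noteq> 0 \<longrightarrow> lev q = lev p"
    and x: "hom_bideg lev m d x"
  shows "hom_bideg lev m d (subst A M x)"
  unfolding hom_bideg_def
proof (intro allI impI)
  fix w assume "subst A M x w \<noteq> 0"
  then obtain a where a: "set a \<subseteq> A" "length a = length w" "x a \<noteq> 0" "Kf M a w \<noteq> 0"
    using subst_nz by blast
  have "map lev w = map lev a"
  proof (rule nth_equalityI)
    show "length (map lev w) = length (map lev a)" using a by simp
    fix i assume "i < length (map lev w)"
    then have i: "i < length w" by simp
    have "M (a ! i) (w ! i) \<noteq> 0" using Kf_nz[OF a(4) a(2) i] .
    moreover have "a ! i \<in> A" using a(1,2) i by auto
    ultimately show "map lev w ! i = map lev a ! i" using Ml i a(2) by auto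
  qed
  then show "length w = m \<and> sum_list (map lev w) = d"
    using x a by (auto simp: hom_bideg_def)
qed

lemma subst_id:
  assumes A: "finite A" and A0: "A0 \<subseteq> A" and M0: "\<forall>p\<in>A0. \<forall>q. M p q = (if p = q then 1 else 0)"
    and x: "\<forall>w. x w \<noteq> 0 \<longrightarrow> set w \<subseteq> A0"
  shows "subst A M x = x"
proof
  fix w
  have "subst A M x w = (\<Sum>a\<in>Wd A (length w). (if a = w then x a else 0))"
    unfolding subst_def
  proof (intro sum.cong refl)
    fix a assume a: "a \<in> Wd A (length w)"
    show "x a * Kf M a w = (if a = w then x a else 0)"
    proof (cases "x a = 0")
      case False
      then have "set a \<subseteq> A0" using x by blast
      then have "Kf M a w = (if a = w then 1 else 0)" using M0 a by (intro Kf_id) (auto simp: Wd_def)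
      then show ?thesis by simp
    qed auto
  qed
  also have "\<dots> = (if w \<in> Wd A (length w) then x w else 0)"
    by (rule sum.delta[OF finite_Wd[OF A]])
  also have "\<dots> = x w" using x A0 by (auto simp: Wd_def)
  finally show "subst A M x w = x w" .
qed




lemma tmul_tmon: "tmul (tmon u) (tmon v) = (tmon (u @ v) :: 'v list \<Rightarrow> 'k::field)"
proof
  fix w :: "'v list"
  have "tmul (tmon u) (tmon v) w = (\<Sum>i\<le>length w. if i = length u \<and> w = u @ v then (1::'k) else 0)"
    unfolding tmul_def tmon_def
  proof (intro sum.cong refl)
    fix i assume "i \<in> {..length w}"
    then have i: "i \<le> length w" by simp
    have "(take i w = u \<and> drop i w = v) \<longleftrightarrow> (i = length u \<and> w = u @ v)"
    proof
      assume h: "take i w = u \<and> drop i w = v"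
      then have "length u = i" using i by auto
      moreover have "w = u @ v" using h append_take_drop_id[of i w] by simp
      ultimately show "i = length u \<and> w = u @ v" by simp
    next
      assume "i = length u \<and> w = u @ v"
      then show "take i w = u \<and> drop i w = v" by simp
    qed
    then show "(if take i w = u then 1 else 0) * (if drop i w = v then 1 else 0) =
      (if i = length u \<and> w = u @ v then (1::'k) else 0)" by auto
  qed
  also have "\<dots> = (tmon (u @ v) w :: 'k)"
    by (auto simp: tmon_def sum.delta' cong: if_cong)
  finally show "tmul (tmon u) (tmon v) w = (tmon (u @ v) w :: 'k)" .
qed

lemma tmon_cons: "tmon (a # u) = tmul (tmon [a]) (tmon u)"
  by (simp add: tmul_tmon)

lemma T_expand: "x \<in> tensor_alg A \<Longrightarrow> x = (\<lambda>w. \<Sum>u\<in>{u. x u \<noteq> 0}. x u * tmon u w)"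
proof
  fix w assume x: "x \<in> tensor_alg A"
  have "(\<Sum>u\<in>{u. x u \<noteq> 0}. x u * tmon u w) = (\<Sum>u\<in>{u. x u \<noteq> 0}. if u = w then x u else 0)"
    by (intro sum.cong refl) (auto simp: tmon_def)
  also have "\<dots> = x w" using tensor_algD(1)[OF x] by (auto simp: sum.delta')
  finally show "x w = (\<Sum>u\<in>{u. x u \<noteq> 0}. x u * tmon u w)" by simp
qed

lemma subst_comp_id:
  assumes A: "finite A"
    and letters: "\<And>v. v \<in> A \<Longrightarrow> subst A N (subst A M (tmon [v])) = tmon [v]"
    and x: "x \<in> tensor_alg A"
  shows "subst A N (subst A M x) = x"
proof -
  have mon: "subst A N (subst A M (tmon u)) = tmon u" if "set u \<subseteq> A" for u
    using that
  proof (induction u)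
    case Nil then show ?case using A by (simp add: subst_tmon_nil)
  next
    case (Cons a u)
    then show ?case using A letters by (simp add: tmon_cons[of a u] subst_mul)
  qed
  have fin: "finite {u. x u \<noteq> 0}" using x by (rule tensor_algD)
  have "subst A N (subst A M x) = subst A N (subst A M (\<lambda>w. \<Sum>u\<in>{u. x u \<noteq> 0}. x u * tmon u w))"
    using T_expand[OF x] by simp
  also have "\<dots> = (\<lambda>w. \<Sum>u\<in>{u. x u \<noteq> 0}. x u * subst A N (subst A M (tmon u)) w)"
    using fin by (simp add: subst_sum)
  also have "\<dots> = (\<lambda>w. \<Sum>u\<in>{u. x u \<noteq> 0}. x u * tmon u w)"
    by (intro ext sum.cong refl) (use mon x in \<open>auto dest: tensor_algD\<close>)
  also have "\<dots> = x" using T_expand[OF x] by simp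
  finally show ?thesis .
qed

definition len1 :: "('v list \<Rightarrow> 'k::field) \<Rightarrow> bool" where
  "len1 x \<longleftrightarrow> (\<forall>w. x w \<noteq> 0 \<longrightarrow> length w = 1)"

lemma tmul11: "len1 p \<Longrightarrow> len1 q \<Longrightarrow> tmul p q w = (case w of [a, b] \<Rightarrow> p [a] * q [b] | _ \<Rightarrow> 0)"
proof -
  assume p: "len1 p" and q: "len1 q"
  have pz: "p u = 0" if "length u \<noteq> 1" for u using p that by (auto simp: len1_def)
  have qz: "q u = 0" if "length u \<noteq> 1" for u using q that by (auto simp: len1_def)
  show ?thesis
  proof (cases w rule: remdups_adj.cases)
    case 1 then show ?thesis by (simp add: tmul_def pz)
  next
    case (2 x) then show ?thesis by (simp add: tmul_def pz qz atMost_Suc)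
  next
    case (3 x y xs)
    show ?thesis
    proof (cases xs)
      case Nil then show ?thesis using 3 by (simp add: tmul_def pz qz atMost_Suc)
    next
      case (Cons z zs)
      have "tmul p q w = 0" unfolding tmul_def
      proof (intro sum.neutral ballI)
        fix i assume "i \<in> {..length w}"
        have "length w \<ge> 3" using 3 Cons by simp
        then have "length (take i w) \<noteq> 1 \<or> length (drop i w) \<noteq> 1" by auto
        then show "p (take i w) * q (drop i w) = 0" using pz qz by auto
      qed
      then show ?thesis using 3 Cons by simp
    qed
  qed
qed

lemma len1_tmon: "len1 (tmon [v])"
  by (auto simp: len1_def tmon_def)

lemma tmul_sum_left: "finite S \<Longrightarrow> tmul (\<lambda>w. \<Sum>q\<in>S. c q * f q w) b = (\<lambda>w. \<Sum>q\<in>S. c q * tmul (f q) b w)"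
  by (simp add: tmul_def fun_eq_iff sum_distrib_left sum_distrib_right mult.assoc sum.swap[of _ S])

lemma Bdeg_len1: "x \<in> Bdeg V lev m \<Longrightarrow> len1 x"
  by (auto simp: Bdeg_def hom_bideg_def len1_def)

lemma Bdeg_expand:
  assumes x: "x \<in> Bdeg V lev m" and fin: "finite V"
  shows "x = (\<lambda>w. \<Sum>q\<in>lay V lev m. x [q] * tmon [q] w)"
proof
  fix w
  have supp: "\<exists>q. w = [q] \<and> q \<in> lay V lev m" if nz: "x w \<noteq> 0" for w
  proof -
    have "length w = 1" "sum_list (map lev w) = m" "set w \<subseteq> Vplus V lev"
      using x nz by (auto simp: Bdeg_def hom_bideg_def tensor_alg_def)
    then obtain q where "w = [q]" by (auto simp: length_Suc_conv)
    then show ?thesis using \<open>sum_list (map lev w) = m\<close> \<open>set w \<subseteq> Vplus V lev\<close>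
      by (auto simp: Vplus_def lay_def)
  qed
  have finl: "finite (lay V lev m)" using fin by (simp add: lay_def)
  show "x w = (\<Sum>q\<in>lay V lev m. x [q] * tmon [q] w)"
  proof (cases "\<exists>q. w = [q] \<and> q \<in> lay V lev m")
    case True
    then obtain q where q: "w = [q]" "q \<in> lay V lev m" by blast
    have "(\<Sum>q'\<in>lay V lev m. x [q'] * tmon [q'] w) = (\<Sum>q'\<in>lay V lev m. if q' = q then x [q'] else 0)"
      by (intro sum.cong refl) (auto simp: tmon_def q)
    also have "\<dots> = x [q]" using q finl by (simp add: sum.delta)
    finally show ?thesis using q by simp
  next
    case False
    then have "x w = 0" using supp by blast
    moreover have "(\<Sum>q\<in>lay V lev m. x [q] * tmon [q] w) = 0"
      using False by (intro sum.neutral) (auto simp: tmon_def)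
    ultimately show ?thesis by simp
  qed
qed

lemma span_reindex:
  assumes x: "x \<in> lin_span (\<psi> ` T)" and inj: "inj_on \<psi> T" and finT: "finite T"
  shows "\<exists>d. x = (\<lambda>w. \<Sum>v\<in>T. d v * \<psi> v w)"
proof -
  obtain F c where F: "finite F" "F \<subseteq> \<psi> ` T" and xe: "x = (\<lambda>w. \<Sum>l\<in>F. c l * l w)"
    using x by (auto simp: lin_span_def)
  define T' where "T' = {v \<in> T. \<psi> v \<in> F}"
  have bij: "bij_betw \<psi> T' F" unfolding T'_def bij_betw_def using inj F(2)
    by (auto simp: inj_on_def image_def)
  define d where "d v = (if v \<in> T' then c (\<psi> v) else 0)" for v
  have "x = (\<lambda>w. \<Sum>v\<in>T. d v * \<psi> v w)"
  proof
    fix w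
    have "(\<Sum>v\<in>T. d v * \<psi> v w) = (\<Sum>v\<in>T'. c (\<psi> v) * \<psi> v w)"
    proof -
      have "(\<Sum>v\<in>T. d v * \<psi> v w) = (\<Sum>v\<in>T. if v \<in> T' then c (\<psi> v) * \<psi> v w else 0)"
        by (intro sum.cong refl) (auto simp: d_def)
      also have "\<dots> = (\<Sum>v\<in>T \<inter> T'. c (\<psi> v) * \<psi> v w)"
        by (simp add: sum.inter_restrict[OF finT])
      also have "T \<inter> T' = T'" by (auto simp: T'_def)
      finally show ?thesis .
    qed
    also have "\<dots> = (\<Sum>l\<in>F. c l * l w)"
      by (rule sum.reindex_bij_betw[OF bij, of "\<lambda>l. c l * l w"])
    finally show "x w = (\<Sum>v\<in>T. d v * \<psi> v w)" using xe by simp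
  qed
  then show ?thesis by blast
qed

lemma indep_reindex:
  assumes ind: "lin_indep (\<psi> ` T)" and inj: "inj_on \<psi> T" and fin: "finite T"
    and z: "(\<lambda>w. \<Sum>v\<in>T. d v * \<psi> v w) = tzero"
  shows "\<forall>v\<in>T. d v = 0"
proof -
  define c where "c l = d (the_inv_into T \<psi> l)" for l
  have "(\<lambda>w. \<Sum>l\<in>\<psi> ` T. c l * l w) = (\<lambda>w. \<Sum>v\<in>T. d v * \<psi> v w)"
  proof
    fix w
    show "(\<Sum>l\<in>\<psi> ` T. c l * l w) = (\<Sum>v\<in>T. d v * \<psi> v w)"
      by (subst sum.reindex[OF inj]) (auto simp: c_def the_inv_into_f_f[OF inj] intro!: sum.cong)
  qed
  then have "\<forall>l\<in>\<psi> ` T. c l = 0" using ind z fin unfolding lin_indep_def by auto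
  then show ?thesis by (auto simp: c_def the_inv_into_f_f[OF inj])
qed




definition sv :: "('v \<times> 'v) set \<Rightarrow> 'v \<Rightarrow> 'v list \<Rightarrow> 'k::field" where
  "sv E v = (\<lambda>u. case u of [b] \<Rightarrow> if b \<in> succs E v then 1 else 0 | _ \<Rightarrow> 0)"

definition sig :: "('v \<times> 'v) set \<Rightarrow> 'v \<Rightarrow> 'v list \<Rightarrow> 'k::field" where
  "sig E v = (\<lambda>u. case u of [a, b] \<Rightarrow> (if a = v \<and> b \<in> succs E v then 1 else 0) | _ \<Rightarrow> 0)"

lemma relB_alt: "relB V lev E = {tmon [v, w] |v w. v \<in> Vplus V lev \<and> w \<in> Vplus V lev \<and> (v, w) \<notin> E}
   \<union> {sig E v |v. v \<in> V \<and> 2 \<le> lev v}"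
  by (simp add: relB_def sig_def)

lemma len1_sv: "len1 (sv E v)"
  by (auto simp: len1_def sv_def split: list.splits)

lemma sig_mul: "sig E v = tmul (tmon [v]) (sv E v)"
proof
  fix w :: "'a list"
  have eq: "tmul (tmon [v]) (sv E v) w = (case w of [a,b] \<Rightarrow> tmon [v] [a] * sv E v [b] | _ \<Rightarrow> 0)"
    by (rule tmul11[OF len1_tmon len1_sv])
  show "sig E v w = tmul (tmon [v]) (sv E v) w" unfolding eq
    by (simp add: sig_def sv_def tmon_def split: list.splits)
qed

lemma sig_nz: "sig E v w \<noteq> 0 \<Longrightarrow> \<exists>b. w = [v, b] \<and> b \<in> succs E v"
  by (auto simp: sig_def split: list.splits if_splits)

lemma sv_nz: "sv E v w \<noteq> 0 \<Longrightarrow> \<exists>b. w = [b] \<and> b \<in> succs E v"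
  by (auto simp: sv_def split: list.splits if_splits)

lemma tmon_nz: "tmon u w \<noteq> 0 \<Longrightarrow> w = u"
  by (auto simp: tmon_def split: if_splits)

lemma rst_tmon: "rst S (tmon u) = (if u \<in> S then tmon u else tzero)"
  by (auto simp: rst_def tmon_def tzero_def fun_eq_iff)

lemma rst_all: "(\<forall>w. x w \<noteq> 0 \<longrightarrow> w \<in> S) \<Longrightarrow> rst S x = x"
  by (auto simp: rst_def fun_eq_iff)

lemma rst_none: "(\<forall>w. x w \<noteq> 0 \<longrightarrow> w \<notin> S) \<Longrightarrow> rst S x = tzero"
  by (auto simp: rst_def fun_eq_iff tzero_def)

locale LG =
  fixes V :: "'v set" and lev :: "'v \<Rightarrow> nat" and E :: "('v \<times> 'v) set" and n :: nat
  assumes lg: "layered_graph V lev E" and n2: "2 \<le> n"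
begin

abbreviation "Vn \<equiv> restrV V lev n"
abbreviation "En \<equiv> restrE V lev E n"
abbreviation "A \<equiv> Vplus Vn lev"
abbreviation "Top \<equiv> lay V lev n"

lemma finV: "finite V" using lg by (simp add: layered_graph_def)
lemma EV: "(v, w) \<in> E \<Longrightarrow> v \<in> V \<and> w \<in> V" using lg by (auto simp: layered_graph_def)
lemma Elev: "(v, w) \<in> E \<Longrightarrow> 1 \<le> lev v \<and> lev w = lev v - 1" using lg by (auto simp: layered_graph_def)

lemma finA: "finite A" using finV by (simp add: Vplus_def restrV_def)
lemma A_iff: "q \<in> A \<longleftrightarrow> q \<in> V \<and> 1 \<le> lev q \<and> lev q \<le> n" by (auto simp: Vplus_def restrV_def)
lemma top_iff: "q \<in> Top \<longleftrightarrow> q \<in> V \<and> lev q = n" by (auto simp: lay_def)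
lemma topA: "q \<in> Top \<Longrightarrow> q \<in> A" using n2 by (auto simp: A_iff top_iff)
lemma A_sub: "A \<subseteq> Vplus V lev" by (auto simp: Vplus_def restrV_def)
lemma finTop: "finite Top" using finV by (simp add: lay_def)

lemma succs_sub: "w \<in> succs E v \<Longrightarrow> w \<in> V \<and> lev w = lev v - 1 \<and> 1 \<le> lev v"
  using EV Elev by (auto simp: succs_def)

lemma succs_En: "v \<in> Vn \<Longrightarrow> succs En v = succs E v"
  using succs_sub by (auto simp: succs_def restrE_def restrV_def)

lemma En_iff: "v \<in> Vn \<Longrightarrow> w \<in> Vn \<Longrightarrow> (v, w) \<in> En \<longleftrightarrow> (v, w) \<in> E"
  by (auto simp: restrE_def)

lemma sig_T:
  assumes "v \<in> V" "2 \<le> lev v" "B = Vplus V lev \<or> (B = A \<and> lev v \<le> n)"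
  shows "(sig E v :: 'v list \<Rightarrow> 'k::field) \<in> tensor_alg B"
proof (rule tensor_algI)
  have "{w. (sig E v :: 'v list \<Rightarrow> 'k) w \<noteq> 0} \<subseteq> (\<lambda>b. [v, b]) ` V"
  proof
    fix w assume "w \<in> {w. (sig E v :: 'v list \<Rightarrow> 'k) w \<noteq> 0}"
    then have "(sig E v :: 'v list \<Rightarrow> 'k) w \<noteq> 0" by simp
    then obtain b where "w = [v, b]" "b \<in> succs E v" using sig_nz[of E v w] by metis
    then show "w \<in> (\<lambda>b. [v, b]) ` V" using succs_sub[of b v] by blast
  qed
  moreover have "finite ((\<lambda>b. [v, b]) ` V)" using finV by simp
  ultimately show "finite {w. (sig E v :: 'v list \<Rightarrow> 'k) w \<noteq> 0}" by (rule finite_subset)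
  fix w assume "(sig E v :: 'v list \<Rightarrow> 'k) w \<noteq> 0"
  then obtain b where "w = [v, b]" "b \<in> succs E v" using sig_nz[of E v w] by metis
  then have vb: "v \<in> V" "b \<in> V" "lev b = lev v - 1" using assms(1) succs_sub[of b v] by auto
  then have "v \<in> Vplus V lev" "b \<in> Vplus V lev" using assms(2) by (auto simp: Vplus_def)
  moreover have "lev v \<le> n \<Longrightarrow> v \<in> A \<and> b \<in> A"
    unfolding A_iff using vb assms(2) by auto
  ultimately show "set w \<subseteq> B" using assms(3) \<open>w = [v, b]\<close> by auto
qed

lemma relB_G_T: "(relB V lev E :: ('v list \<Rightarrow> 'k::field) set) \<subseteq> tensor_alg (Vplus V lev)"
proof
  fix g :: "'v list \<Rightarrow> 'k" assume "g \<in> relB V lev E"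
  then consider (a) v w where "g = tmon [v, w]" "v \<in> Vplus V lev" "w \<in> Vplus V lev"
    | (b) v where "g = (sig E v :: 'v list \<Rightarrow> 'k)" "v \<in> V" "2 \<le> lev v"
    unfolding relB_alt by blast
  then show "g \<in> tensor_alg (Vplus V lev)"
  proof cases
    case a then show ?thesis by (auto intro: tmon_T)
  next
    case b then show ?thesis using sig_T[of v "Vplus V lev"] by simp
  qed
qed

lemma relB_n_sub: "(relB Vn lev En :: ('v list \<Rightarrow> 'k::field) set) \<subseteq> relB V lev E"
proof
  fix g :: "'v list \<Rightarrow> 'k" assume "g \<in> relB Vn lev En"
  then consider (a) v w where "g = tmon [v, w]" "v \<in> A" "w \<in> A" "(v, w) \<notin> En"
    | (b) v where "g = (sig En v :: 'v list \<Rightarrow> 'k)" "v \<in> Vn" "2 \<le> lev v"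
    unfolding relB_alt by blast
  then show "g \<in> relB V lev E"
  proof cases
    case a
    have "v \<in> Vn" "w \<in> Vn" using a by (auto simp: Vplus_def)
    then have "(v, w) \<notin> E" using En_iff[of v w] a(4) by simp
    then show ?thesis using a A_sub unfolding relB_alt by blast
  next
    case b
    have "succs En v = succs E v" using b(2) by (rule succs_En)
    then have "(sig En v :: 'v list \<Rightarrow> 'k) = sig E v" unfolding sig_def by simp
    then have "g = sig E v" using b(1) by simp
    then show ?thesis using b unfolding relB_alt by (auto simp: restrV_def)
  qed
qed

lemma relB_n_T: "(relB Vn lev En :: ('v list \<Rightarrow> 'k::field) set) \<subseteq> tensor_alg A"
proof
  fix g :: "'v list \<Rightarrow> 'k" assume "g \<in> relB Vn lev En"
  then consider (a) v w where "g = tmon [v, w]" "v \<in> A" "w \<in> A"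
    | (b) v where "g = (sig En v :: 'v list \<Rightarrow> 'k)" "v \<in> Vn" "2 \<le> lev v"
    unfolding relB_alt by blast
  then show "g \<in> tensor_alg A"
  proof cases
    case a then show ?thesis by (auto intro: tmon_T)
  next
    case b
    have "succs En v = succs E v" using b(2) by (rule succs_En)
    then have "(sig En v :: 'v list \<Rightarrow> 'k) = sig E v" unfolding sig_def by simp
    then have "g = sig E v" using b(1) by simp
    then show ?thesis using b sig_T[of v A] by (auto simp: restrV_def)
  qed
qed

lemma RG_ideal: "is_two_sided_ideal (Vplus V lev) (RB V lev E :: ('v list \<Rightarrow> 'k::field) set)"
  unfolding RB_def by (rule ideal_gen_ideal[OF relB_G_T])

lemma IB_ideal: "is_two_sided_ideal A (RB Vn lev En :: ('v list \<Rightarrow> 'k::field) set)"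
  unfolding RB_def by (rule ideal_gen_ideal[OF relB_n_T])

lemma relB_n_IB: "(relB Vn lev En :: ('v list \<Rightarrow> 'k::field) set) \<subseteq> RB Vn lev En"
  unfolding RB_def by (rule ideal_gen_base)

lemma relB_G_RG: "(relB V lev E :: ('v list \<Rightarrow> 'k::field) set) \<subseteq> RB V lev E"
  unfolding RB_def by (rule ideal_gen_base)

lemma IB_sub_RG: "(RB Vn lev En :: ('v list \<Rightarrow> 'k::field) set) \<subseteq> RB V lev E"
proof -
  let ?J = "(RB V lev E :: ('v list \<Rightarrow> 'k::field) set) \<inter> tensor_alg A"
  have I: "is_two_sided_ideal (Vplus V lev) (RB V lev E :: ('v list \<Rightarrow> 'k::field) set)" by (rule RG_ideal)
  have TA: "tensor_alg A \<subseteq> tensor_alg (Vplus V lev)" using A_sub by (rule tensor_alg_mono)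
  have "is_two_sided_ideal A ?J"
    unfolding is_two_sided_ideal_def
  proof (intro conjI ballI allI)
    show "?J \<subseteq> tensor_alg A" by blast
    show "tzero \<in> ?J" using id0[OF I] tzero_T by blast
    fix x assume x: "x \<in> ?J"
    { fix y assume "y \<in> ?J" then show "tadd x y \<in> ?J" using x idadd[OF I] tadd_T by blast }
    fix c show "tscale c x \<in> ?J" using x idscale[OF I] tscale_T by blast
  next
    fix a :: "'v list \<Rightarrow> 'k" and x assume a: "a \<in> tensor_alg A" and x: "x \<in> ?J"
    then have aT: "a \<in> tensor_alg (Vplus V lev)" using TA by blast
    show "tmul a x \<in> ?J" using idmull[OF I aT] x a tmul_T by blast
    show "tmul x a \<in> ?J" using idmulr[OF I aT] x a tmul_T by blast
  qed
  moreover have "(relB Vn lev En :: ('v list \<Rightarrow> 'k::field) set) \<subseteq> ?J"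
    using relB_n_sub relB_G_RG relB_n_T by blast
  ultimately show ?thesis unfolding RB_def[of Vn] by (rule ideal_gen_min[THEN order_trans]) blast
qed

lemma gens_len2:
  fixes g :: "'v list \<Rightarrow> 'k::field"
  assumes g: "g \<in> relB V lev E" and nz: "g w \<noteq> 0" shows "length w = 2"
proof -
  from g consider (a) v w' where "g = tmon [v, w']"
    | (b) v where "g = (sig E v :: 'v list \<Rightarrow> 'k)"
    unfolding relB_alt by blast
  then show ?thesis
  proof cases
    case a
    then have "tmon [v, w'] w \<noteq> (0::'k)" using nz by simp
    then have "w = [v, w']" by (rule tmon_nz)
    then show ?thesis by simp
  next
    case b
    then have "(sig E v :: 'v list \<Rightarrow> 'k) w \<noteq> 0" using nz by simp
    then obtain c where "w = [v, c]" using sig_nz[of E v w] by blast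
    then show ?thesis by simp
  qed
qed

lemma gens_low0: "(g :: 'v list \<Rightarrow> 'k::field) \<in> relB V lev E \<Longrightarrow> low0 g"
  unfolding low0_def using gens_len2[of g] by fastforce

definition Stop :: "'v list set" where
  "Stop = {[a, b] |a b. a \<in> Top \<and> b \<in> A}"

lemma RG_restr:
  fixes x :: "'v list \<Rightarrow> 'k::field"
  assumes x: "x \<in> RB V lev E"
  shows "low0 x \<and> rst Stop x \<in> RB Vn lev En"
proof -
  have 1: "\<forall>g\<in>(relB V lev E :: ('v list \<Rightarrow> 'k) set). low0 g" using gens_low0 by blast
  have 2: "\<forall>w\<in>Stop. length w = 2" by (auto simp: Stop_def)
  have x': "x \<in> ideal_gen (Vplus V lev) (relB V lev E)" using x by (simp add: RB_def)
  have 3: "\<forall>g\<in>(relB V lev E :: ('v list \<Rightarrow> 'k) set). rst Stop g \<in> RB Vn lev En"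
  proof
    fix g :: "'v list \<Rightarrow> 'k" assume g: "g \<in> relB V lev E"
    have z: "tzero \<in> (RB Vn lev En :: ('v list \<Rightarrow> 'k) set)" by (rule id0[OF IB_ideal])
    from g consider (a) v w where "g = tmon [v, w]" "v \<in> Vplus V lev" "w \<in> Vplus V lev" "(v, w) \<notin> E"
      | (b) v where "g = (sig E v :: 'v list \<Rightarrow> 'k)" "v \<in> V" "2 \<le> lev v"
      unfolding relB_alt by blast
    then show "rst Stop g \<in> RB Vn lev En"
    proof cases
      case a
      show ?thesis
      proof (cases "[v, w] \<in> Stop")
        case True
        then have "v \<in> A" "w \<in> A" using topA by (auto simp: Stop_def)
        moreover have "(v, w) \<notin> En" using a(4) by (auto simp: restrE_def)
        ultimately have "g \<in> relB Vn lev En" using a(1) unfolding relB_alt by blast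
        then show ?thesis using relB_n_IB True a(1) by (auto simp: rst_tmon)
      qed (use a z in \<open>auto simp: rst_tmon\<close>)
    next
      case b
      show ?thesis
      proof (cases "lev v = n")
        case True
        have "rst Stop g = g"
        proof (rule rst_all, intro allI impI)
          fix u assume "g u \<noteq> 0"
          then have "(sig E v :: 'v list \<Rightarrow> 'k) u \<noteq> 0" using b(1) by simp
          then obtain c where "u = [v, c]" "c \<in> succs E v" using sig_nz[of E v u] by blast
          then show "u \<in> Stop" using succs_sub[of c v] b True n2
            by (auto simp: Stop_def top_iff A_iff)
        qed
        moreover have "v \<in> Vn" using b True by (auto simp: restrV_def)
        moreover have "g = sig En v"
        proof -
          have "succs En v = succs E v" using \<open>v \<in> Vn\<close> by (rule succs_En)
          then have "(sig En v :: 'v list \<Rightarrow> 'k) = sig E v" unfolding sig_def by simp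
          then show ?thesis using b(1) by simp
        qed
        ultimately show ?thesis using relB_n_IB b unfolding relB_alt by blast
      next
        case False
        have "rst Stop g = tzero"
        proof (rule rst_none, intro allI impI)
          fix u assume "g u \<noteq> 0"
          then have "(sig E v :: 'v list \<Rightarrow> 'k) u \<noteq> 0" using b(1) by simp
          then obtain c where "u = [v, c]" using sig_nz[of E v u] by blast
          then show "u \<notin> Stop" using False by (auto simp: Stop_def top_iff)
        qed
        then show ?thesis using z by simp
      qed
    qed
  qed
  show ?thesis by (rule restr_ideal[OF relB_G_T 1 IB_ideal 2 3 x'])
qed

lemma RG_low0: "(x :: 'v list \<Rightarrow> 'k::field) \<in> RB V lev E \<Longrightarrow> low0 x"
  using RG_restr by blast

lemma transfer:
  fixes x :: "'v list \<Rightarrow> 'k::field"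
  assumes "x \<in> RB V lev E" "\<forall>w. x w \<noteq> 0 \<longrightarrow> w \<in> Stop"
  shows "x \<in> RB Vn lev En"
  using RG_restr[OF assms(1)] rst_all[OF assms(2)] by simp

lemma first_letter:
  fixes x :: "'v list \<Rightarrow> 'k::field"
  assumes x: "x \<in> RB V lev E"
  shows "rst {w. length w = 2 \<and> hd w = q} x \<in> RB V lev E"
proof -
  let ?S = "{w :: 'v list. length w = 2 \<and> hd w = q}"
  have 1: "\<forall>g\<in>(relB V lev E :: ('v list \<Rightarrow> 'k) set). low0 g" using gens_low0 by blast
  have 2: "\<forall>w\<in>?S. length w = 2" by auto
  have x': "x \<in> ideal_gen (Vplus V lev) (relB V lev E)" using x by (simp add: RB_def)
  have 3: "\<forall>g\<in>(relB V lev E :: ('v list \<Rightarrow> 'k) set). rst ?S g \<in> RB V lev E"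
    proof
      fix g :: "'v list \<Rightarrow> 'k" assume g: "g \<in> relB V lev E"
      have z: "tzero \<in> (RB V lev E :: ('v list \<Rightarrow> 'k) set)" by (rule id0[OF RG_ideal])
      have gR: "g \<in> RB V lev E" using g relB_G_RG by blast
      from g consider (a) v w where "g = tmon [v, w]"
        | (b) v where "g = (sig E v :: 'v list \<Rightarrow> 'k)"
        unfolding relB_alt by blast
      then show "rst ?S g \<in> RB V lev E"
      proof cases
        case a then show ?thesis using gR z by (auto simp: rst_tmon)
      next
        case b
        show ?thesis
        proof (cases "v = q")
          case True
          have "rst ?S g = g"
          proof (rule rst_all, intro allI impI)
            fix u assume "g u \<noteq> 0"
            then have "(sig E v :: 'v list \<Rightarrow> 'k) u \<noteq> 0" using b(1) by simp
            then obtain c where "u = [v, c]" using sig_nz[of E v u] by blast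
            then show "u \<in> ?S" using True by simp
          qed
          then show ?thesis using gR by simp
        next
          case False
          have "rst ?S g = tzero"
          proof (rule rst_none, intro allI impI)
            fix u assume "g u \<noteq> 0"
            then have "(sig E v :: 'v list \<Rightarrow> 'k) u \<noteq> 0" using b(1) by simp
            then obtain c where "u = [v, c]" using sig_nz[of E v u] by blast
            then show "u \<notin> ?S" using False by simp
          qed
          then show ?thesis using z by simp
        qed
      qed
    qed
  have "low0 x \<and> rst ?S x \<in> RB V lev E" by (rule restr_ideal[OF relB_G_T 1 RG_ideal 2 3 x'])
  then show ?thesis by blast
qed

lemma Bdeg_nz: "x \<in> Bdeg V lev m \<Longrightarrow> x w \<noteq> 0 \<Longrightarrow> \<exists>q. w = [q] \<and> q \<in> V \<and> lev q = m \<and> 1 \<le> lev q"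
proof -
  assume x: "x \<in> Bdeg V lev m" and nz: "x w \<noteq> 0"
  have "length w = 1" "sum_list (map lev w) = m" "set w \<subseteq> Vplus V lev"
    using x nz by (auto simp: Bdeg_def hom_bideg_def tensor_alg_def)
  then obtain q where "w = [q]" by (auto simp: length_Suc_conv)
  then show ?thesis using \<open>sum_list (map lev w) = m\<close> \<open>set w \<subseteq> Vplus V lev\<close>
    by (auto simp: Vplus_def)
qed

lemma kappa_bridge:
  fixes a b :: "'v list \<Rightarrow> 'k::field"
  assumes a: "a \<in> Bdeg V lev n" and b: "b \<in> Bdeg V lev (n - 1)"
  shows "tmul a b \<in> RB V lev E \<longleftrightarrow> tmul a b \<in> RB Vn lev En"
proof
  assume r: "tmul a b \<in> RB V lev E"
  show "tmul a b \<in> RB Vn lev En"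
  proof (rule transfer[OF r], intro allI impI)
    fix w assume "tmul a b w \<noteq> 0"
    then obtain p q where w: "w = [p, q]" "a [p] \<noteq> 0" "b [q] \<noteq> 0"
      using tmul11[OF Bdeg_len1[OF a] Bdeg_len1[OF b], of w] by (auto split: list.splits)
    then show "w \<in> Stop" using Bdeg_nz[OF a w(2)] Bdeg_nz[OF b w(3)] n2
      by (auto simp: Stop_def top_iff A_iff)
  qed
qed (use IB_sub_RG in blast)

lemma Bdeg_T: "m \<le> n \<Longrightarrow> x \<in> Bdeg V lev m \<Longrightarrow> x \<in> tensor_alg A"
proof -
  assume m: "m \<le> n" and x: "x \<in> Bdeg V lev m"
  show ?thesis
  proof (rule tensor_algI)
    show "finite {w. x w \<noteq> 0}" using x by (auto simp: Bdeg_def tensor_alg_def)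
    fix w assume "x w \<noteq> 0"
    then show "set w \<subseteq> A" using Bdeg_nz[OF x] m by (force simp: A_iff)
  qed
qed

lemma tmon_Bdeg: "q \<in> V \<Longrightarrow> lev q = m \<Longrightarrow> 1 \<le> m \<Longrightarrow> tmon [q] \<in> Bdeg V lev m"
proof -
  assume q: "q \<in> V" "lev q = m" "1 \<le> m"
  have "tmon [q] \<in> tensor_alg (Vplus V lev)" by (rule tmon_T) (use q in \<open>auto simp: Vplus_def\<close>)
  then show ?thesis using q by (auto simp: Bdeg_def hom_bideg_def tmon_def)
qed

end



context LG begin

definition Mok :: "('v \<Rightarrow> 'v \<Rightarrow> 'k::field) \<Rightarrow> bool" where
  "Mok M \<longleftrightarrow> (\<forall>p\<in>A. \<forall>q. M p q \<noteq> 0 \<longrightarrow> q \<in> A \<and> lev q = lev p) \<and>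
     (\<forall>p\<in>A. lev p \<noteq> n \<longrightarrow> (\<forall>q. M p q = (if p = q then 1 else 0))) \<and>
     (\<forall>p\<in>Top. \<forall>q. M p q \<noteq> 0 \<longrightarrow>
        kappa V lev E n (tmon [p] :: 'v list \<Rightarrow> 'k) \<subseteq> kappa V lev E n (tmon [q]))"

context
  fixes M :: "'v \<Rightarrow> 'v \<Rightarrow> 'k::field"
  assumes M: "Mok M"
begin

lemma M1: "\<forall>p\<in>A. \<forall>q. M p q \<noteq> 0 \<longrightarrow> q \<in> A \<and> lev q = lev p"
  using M unfolding Mok_def by (rule conjunct1)
lemma M2: "\<forall>p\<in>A. lev p \<noteq> n \<longrightarrow> (\<forall>q. M p q = (if p = q then 1 else 0))"
  using M unfolding Mok_def by (rule conjunct1[OF conjunct2])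
lemma M3: "\<forall>p\<in>Top. \<forall>q. M p q \<noteq> 0 \<longrightarrow>
        kappa V lev E n (tmon [p] :: 'v list \<Rightarrow> 'k) \<subseteq> kappa V lev E n (tmon [q])"
  using M unfolding Mok_def by (rule conjunct2[OF conjunct2])
lemma M_A: "p \<in> A \<Longrightarrow> M p q \<noteq> 0 \<Longrightarrow> q \<in> A" using M1 by blast
lemma M_lev: "p \<in> A \<Longrightarrow> M p q \<noteq> 0 \<Longrightarrow> lev q = lev p" using M1 by blast
lemma M_low: "p \<in> A \<Longrightarrow> lev p \<noteq> n \<Longrightarrow> M p q = (if p = q then 1 else 0)" using M2 by blast
lemma M_kappa: "p \<in> Top \<Longrightarrow> M p q \<noteq> 0 \<Longrightarrow>
    kappa V lev E n (tmon [p] :: 'v list \<Rightarrow> 'k) \<subseteq> kappa V lev E n (tmon [q])"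
  using M3 by blast

lemma M_T: "x \<in> tensor_alg A \<Longrightarrow> subst A M x \<in> tensor_alg A"
  by (rule subst_T[OF finA]) (use M_A in blast)

lemma row: "p \<in> A \<Longrightarrow> subst A M (tmon [p]) = (\<lambda>w. case w of [q] \<Rightarrow> M p q | _ \<Rightarrow> 0)"
  by (rule subst_tmon1[OF finA])

lemma row_len1: "p \<in> A \<Longrightarrow> len1 (subst A M (tmon [p]))"
proof -
  assume p: "p \<in> A"
  show ?thesis unfolding row[OF p] by (auto simp: len1_def split: list.splits)
qed

lemma row_low: "p \<in> A \<Longrightarrow> lev p \<noteq> n \<Longrightarrow> subst A M (tmon [p]) = tmon [p]"
proof -
  assume p: "p \<in> A" "lev p \<noteq> n"
  show ?thesis unfolding row[OF p(1)] using M_low[OF p] by (auto simp: tmon_def fun_eq_iff split: list.splits)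
qed

lemma row_sum: "p \<in> Top \<Longrightarrow> subst A M (tmon [p]) = (\<lambda>w. \<Sum>q\<in>Top. M p q * tmon [q] w)"
proof
  fix w assume p: "p \<in> Top"
  then have pA: "p \<in> A" by (rule topA)
  show "subst A M (tmon [p]) w = (\<Sum>q\<in>Top. M p q * tmon [q] w)"
  proof (cases "\<exists>q. w = [q]")
    case True
    then obtain q where w: "w = [q]" by blast
    have "(\<Sum>q'\<in>Top. M p q' * tmon [q'] w) = (\<Sum>q'\<in>Top. if q' = q then M p q' else 0)"
      by (intro sum.cong refl) (auto simp: tmon_def w)
    also have "\<dots> = (if q \<in> Top then M p q else 0)" using finTop by (simp add: sum.delta)
    also have "\<dots> = M p q"
    proof (cases "M p q = 0")
      case False
      then have "q \<in> A" "lev q = lev p" using M_A[OF pA] M_lev[OF pA] by auto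
      then have "q \<in> Top" using p by (auto simp: A_iff top_iff)
      then show ?thesis by simp
    qed simp
    finally show ?thesis using pA by (simp add: row w)
  next
    case False
    then have "(\<Sum>q\<in>Top. M p q * tmon [q] w) = 0" by (intro sum.neutral) (auto simp: tmon_def)
    then show ?thesis using False pA by (auto simp: row split: list.splits)
  qed
qed

lemma tscale_zero: "tscale 0 x = tzero"
  by (simp add: tscale_def tzero_def)

lemma ROW:
  assumes p: "p \<in> Top" and b: "b \<in> kappa V lev E n (tmon [p] :: 'v list \<Rightarrow> 'k)"
  shows "tmul (subst A M (tmon [p])) b \<in> RB Vn lev En"
proof -
  have I: "is_two_sided_ideal A (RB Vn lev En :: ('v list \<Rightarrow> 'k) set)" by (rule IB_ideal)
  have eq: "tmul (subst A M (tmon [p])) b = (\<lambda>w. \<Sum>q\<in>Top. tscale (M p q) (tmul (tmon [q]) b) w)"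
    unfolding row_sum[OF p] tmul_sum_left[OF finTop] by (simp add: tscale_def)
  show ?thesis unfolding eq
  proof (rule idsum[OF I finTop])
    fix q assume q: "q \<in> Top"
    show "tscale (M p q) (tmul (tmon [q]) b) \<in> RB Vn lev En"
    proof (cases "M p q = 0")
      case True then show ?thesis using id0[OF I] by (simp add: tscale_zero)
    next
      case False
      then have "b \<in> kappa V lev E n (tmon [q])" using M_kappa[OF p False] b by blast
      then have bB: "b \<in> Bdeg V lev (n - 1)" and r: "tmul (tmon [q]) b \<in> RB V lev E"
        by (auto simp: kappa_def)
      have "tmon [q] \<in> (Bdeg V lev n :: ('v list \<Rightarrow> 'k) set)" using q n2 by (intro tmon_Bdeg) (auto simp: top_iff)
      then have "tmul (tmon [q]) b \<in> RB Vn lev En" using kappa_bridge[OF _ bB] r by blast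
      then show ?thesis by (rule idscale[OF I])
    qed
  qed
qed

end

lemma NE:
  fixes x :: "'v list \<Rightarrow> 'k::field"
  assumes x: "x \<in> tensor_alg A" and ne: "\<forall>w. x w \<noteq> 0 \<longrightarrow> (\<exists>p q. w = [p, q] \<and> (p, q) \<notin> E)"
  shows "x \<in> RB Vn lev En"
proof -
  have I: "is_two_sided_ideal A (RB Vn lev En :: ('v list \<Rightarrow> 'k) set)" by (rule IB_ideal)
  have fin: "finite {u. x u \<noteq> 0}" using x by (rule tensor_algD)
  have "(\<lambda>w. \<Sum>u\<in>{u. x u \<noteq> 0}. tscale (x u) (tmon u) w) \<in> RB Vn lev En"
  proof (rule idsum[OF I fin])
    fix u assume u: "u \<in> {u. x u \<noteq> 0}"
    then obtain p q where pq: "u = [p, q]" "(p, q) \<notin> E" using ne by blast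
    have "set u \<subseteq> A" using x u by (auto dest: tensor_algD)
    then have "p \<in> A" "q \<in> A" using pq by auto
    moreover have "(p, q) \<notin> En" using pq by (auto simp: restrE_def)
    ultimately have "tmon u \<in> (relB Vn lev En :: ('v list \<Rightarrow> 'k) set)" unfolding relB_alt pq by blast
    then have "tmon u \<in> (RB Vn lev En :: ('v list \<Rightarrow> 'k) set)" using relB_n_IB by blast
    then show "tscale (x u) (tmon u) \<in> RB Vn lev En" by (rule idscale[OF I])
  qed
  moreover have "(\<lambda>w. \<Sum>u\<in>{u. x u \<noteq> 0}. tscale (x u) (tmon u) w) = x"
    using T_expand[OF x] by (simp add: tscale_def)
  ultimately show ?thesis by simp
qed

lemma GEN:
  fixes M :: "'v \<Rightarrow> 'v \<Rightarrow> 'k::field"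
  assumes M: "Mok M" and x: "x \<in> RB Vn lev En"
  shows "subst A M x \<in> RB Vn lev En"
proof -
  have I: "is_two_sided_ideal A (RB Vn lev En :: ('v list \<Rightarrow> 'k) set)" by (rule IB_ideal)
  let ?J = "{x \<in> tensor_alg A. subst A M x \<in> RB Vn lev En}"
  have J: "is_two_sided_ideal A ?J"
    unfolding is_two_sided_ideal_def
  proof (intro conjI ballI allI)
    show "?J \<subseteq> tensor_alg A" by blast
    show "tzero \<in> ?J" using id0[OF I] tzero_T by (simp add: subst_tzero)
    fix x assume x: "x \<in> ?J"
    { fix y assume y: "y \<in> ?J"
      have "tadd x y \<in> tensor_alg A" using x y by (intro tadd_T) auto
      moreover have "subst A M (tadd x y) \<in> RB Vn lev En" unfolding subst_tadd using x y by (intro idadd[OF I]) auto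
      ultimately show "tadd x y \<in> ?J" by blast }
    fix c
    have "tscale c x \<in> tensor_alg A" using x by (intro tscale_T) auto
    moreover have "subst A M (tscale c x) \<in> RB Vn lev En" unfolding subst_tscale using x by (intro idscale[OF I]) auto
    ultimately show "tscale c x \<in> ?J" by blast
  next
    fix a :: "'v list \<Rightarrow> 'k" and x assume a: "a \<in> tensor_alg A" and x: "x \<in> ?J"
    have aT: "subst A M a \<in> tensor_alg A" using M_T[OF M a] .
    have xT: "x \<in> tensor_alg A" and xI: "subst A M x \<in> RB Vn lev En" using x by auto
    have "tmul a x \<in> tensor_alg A" using a xT by (rule tmul_T)
    moreover have "subst A M (tmul a x) \<in> RB Vn lev En" unfolding subst_mul[OF finA] using idmull[OF I aT xI] .
    ultimately show "tmul a x \<in> ?J" by blast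
    have "tmul x a \<in> tensor_alg A" using xT a by (rule tmul_T)
    moreover have "subst A M (tmul x a) \<in> RB Vn lev En" unfolding subst_mul[OF finA] using idmulr[OF I aT xI] .
    ultimately show "tmul x a \<in> ?J" by blast
  qed
  have low_fix: "subst A M y = y" if "\<forall>w. y w \<noteq> 0 \<longrightarrow> set w \<subseteq> A - Top" for y :: "'v list \<Rightarrow> 'k"
  proof (rule subst_id[OF finA _ _ that])
    show "A - Top \<subseteq> A" by blast
    show "\<forall>p\<in>A - Top. \<forall>q. M p q = (if p = q then 1 else 0)"
      using M_low[OF M] by (auto simp: top_iff A_iff)
  qed
  have gens: "(relB Vn lev En :: ('v list \<Rightarrow> 'k) set) \<subseteq> ?J"
  proof
    fix g :: "'v list \<Rightarrow> 'k" assume g: "g \<in> relB Vn lev En"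
    have gT: "g \<in> tensor_alg A" using g relB_n_T by blast
    have gI: "g \<in> RB Vn lev En" using g relB_n_IB by blast
    from g consider (a) v w where "g = tmon [v, w]" "v \<in> A" "w \<in> A" "(v, w) \<notin> En"
      | (b) v where "g = (sig En v :: 'v list \<Rightarrow> 'k)" "v \<in> Vn" "2 \<le> lev v"
      unfolding relB_alt by blast
    then have "subst A M g \<in> RB Vn lev En"
    proof cases
      case a
      have vV: "v \<in> Vn" "w \<in> Vn" using a by (auto simp: Vplus_def)
      have nE: "(v, w) \<notin> E" using En_iff[OF vV] a(4) by simp
      have sg: "subst A M g = tmul (subst A M (tmon [v])) (subst A M (tmon [w]))"
        using a(1) by (simp add: tmon_cons[of v "[w]"] subst_mul[OF finA])
      consider (i) "lev v = n" "lev w = n - 1" | (ii) "lev v \<noteq> n" "lev w \<noteq> n"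
        | (iii) "lev w \<noteq> lev v - 1"
      proof -
        have lv: "lev v \<le> n" "1 \<le> lev v" "lev w \<le> n" using a(2,3) by (auto simp: A_iff)
        assume c1: "lev v = n \<Longrightarrow> lev w = n - 1 \<Longrightarrow> thesis"
          and c2: "lev v \<noteq> n \<Longrightarrow> lev w \<noteq> n \<Longrightarrow> thesis"
          and c3: "lev w \<noteq> lev v - 1 \<Longrightarrow> thesis"
        show thesis
        proof (cases "lev v = n")
          case True then show ?thesis using c1 c3 by (cases "lev w = n - 1") auto
        next
          case False then show ?thesis using c2 c3 lv by (cases "lev w = n") auto
        qed
      qed
      then show ?thesis
      proof cases
        case i
        have vt: "v \<in> Top" using vV i by (auto simp: top_iff restrV_def)
        have rw: "subst A M (tmon [w]) = tmon [w]" using row_low[OF M a(3)] i n2 by simp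
        have "tmon [w] \<in> (Bdeg V lev (n - 1) :: ('v list \<Rightarrow> 'k) set)"
          using vV i n2 by (intro tmon_Bdeg) (auto simp: restrV_def)
        moreover have "tmul (tmon [v]) (tmon [w]) \<in> (RB V lev E :: ('v list \<Rightarrow> 'k) set)"
        proof -
          have "tmon [v, w] \<in> (relB V lev E :: ('v list \<Rightarrow> 'k) set)"
            unfolding relB_alt using a(2,3) A_sub nE by blast
          then show ?thesis using relB_G_RG by (simp add: tmul_tmon) blast
        qed
        ultimately have "tmon [w] \<in> kappa V lev E n (tmon [v] :: 'v list \<Rightarrow> 'k)" by (simp add: kappa_def)
        from ROW[OF M vt this] show ?thesis unfolding sg rw .
      next
        case ii
        have "subst A M g = g"
          by (rule low_fix) (use a ii in \<open>auto simp: tmon_def top_iff A_iff split: if_splits\<close>)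
        then show ?thesis using gI by simp
      next
        case iii
        show ?thesis
        proof (rule NE)
          show "subst A M g \<in> tensor_alg A" using M_T[OF M gT] .
          show "\<forall>u. subst A M g u \<noteq> 0 \<longrightarrow> (\<exists>p q. u = [p, q] \<and> (p, q) \<notin> E)"
          proof (intro allI impI)
            fix u assume nz: "subst A M g u \<noteq> 0"
            have "subst A M g u = (case u of [p, q] \<Rightarrow> M v p * M w q | _ \<Rightarrow> 0)"
              unfolding sg tmul11[OF row_len1[OF M a(2)] row_len1[OF M a(3)]]
              by (simp add: row[OF M a(2)] row[OF M a(3)] split: list.splits)
            with nz obtain p q where u: "u = [p, q]" "M v p \<noteq> 0" "M w q \<noteq> 0"
              by (auto split: list.splits)
            have "lev p = lev v" "lev q = lev w" using M_lev[OF M] a(2,3) u by auto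
            then have "(p, q) \<notin> E" using iii Elev by auto
            then show "\<exists>p q. u = [p, q] \<and> (p, q) \<notin> E" using u by blast
          qed
        qed
      qed
    next
      case b
      have sE: "succs En v = succs E v" using b(2) by (rule succs_En)
      have gsig: "g = tmul (tmon [v]) (sv En v)" using b(1) by (simp add: sig_mul)
      have vA: "v \<in> A" using b by (auto simp: Vplus_def)
      have vVn: "v \<in> V" "lev v \<le> n" using b(2) by (auto simp: restrV_def)
      have sv_low: "\<forall>u. (sv En v :: 'v list \<Rightarrow> 'k) u \<noteq> 0 \<longrightarrow> set u \<subseteq> A - Top"
      proof (intro allI impI)
        fix u assume "(sv En v :: 'v list \<Rightarrow> 'k) u \<noteq> 0"
        then obtain c where "u = [c]" "c \<in> succs E v" using sv_nz[of En v u] sE by auto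
        then show "set u \<subseteq> A - Top" using succs_sub[of c v] b(3) vVn n2 by (auto simp: A_iff top_iff)
      qed
      show ?thesis
      proof (cases "lev v = n")
        case True
        have vt: "v \<in> Top" using vVn True by (auto simp: top_iff)
        have sfix: "subst A M (sv En v) = sv En v" by (rule low_fix[OF sv_low])
        have sg: "subst A M g = tmul (subst A M (tmon [v])) (sv En v)"
          using gsig sfix by (simp add: subst_mul[OF finA])
        have "sv En v \<in> kappa V lev E n (tmon [v] :: 'v list \<Rightarrow> 'k)"
        proof -
          have "(sv En v :: 'v list \<Rightarrow> 'k) \<in> Bdeg V lev (n - 1)"
            unfolding Bdeg_def hom_bideg_def
          proof (intro CollectI conjI allI impI tensor_algI)
            have "{u. (sv En v :: 'v list \<Rightarrow> 'k) u \<noteq> 0} \<subseteq> (\<lambda>c. [c]) ` V"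
            proof
              fix u assume "u \<in> {u. (sv En v :: 'v list \<Rightarrow> 'k) u \<noteq> 0}"
              then obtain c where "u = [c]" "c \<in> succs E v" using sv_nz[of En v u] sE by auto
              then show "u \<in> (\<lambda>c. [c]) ` V" using succs_sub[of c v] by blast
            qed
            then show "finite {u. (sv En v :: 'v list \<Rightarrow> 'k) u \<noteq> 0}"
              using finV by (rule finite_subset[OF _ finite_imageI])
            fix u assume "(sv En v :: 'v list \<Rightarrow> 'k) u \<noteq> 0"
            then obtain c where c: "u = [c]" "c \<in> succs E v" using sv_nz[of En v u] sE by auto
            then show "set u \<subseteq> Vplus V lev" "length u = 1" "sum_list (map lev u) = n - 1"
              using succs_sub[of c v] b True by (auto simp: Vplus_def)
          qed
          moreover have "tmul (tmon [v]) (sv En v) \<in> (RB V lev E :: ('v list \<Rightarrow> 'k) set)"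
          proof -
            have "(sig En v :: 'v list \<Rightarrow> 'k) = sig E v" using sE unfolding sig_def by simp
            moreover have "(sig E v :: 'v list \<Rightarrow> 'k) \<in> relB V lev E" unfolding relB_alt
              using b by (auto simp: restrV_def)
            ultimately have "(sig En v :: 'v list \<Rightarrow> 'k) \<in> RB V lev E" using subsetD[OF relB_G_RG] by simp
            moreover have "(sig En v :: 'v list \<Rightarrow> 'k) = tmul (tmon [v]) (sv En v)" by (rule sig_mul)
            ultimately show ?thesis by simp
          qed
          ultimately show ?thesis by (simp add: kappa_def)
        qed
        from ROW[OF M vt this] show ?thesis unfolding sg .
      next
        case False
        have "subst A M g = g"
        proof (rule low_fix, intro allI impI)
          fix u assume "g u \<noteq> 0"
          then have "(sig En v :: 'v list \<Rightarrow> 'k) u \<noteq> 0" using b(1) by simp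
          then obtain c where "u = [v, c]" "c \<in> succs E v" using sig_nz[of En v u] sE by auto
          then show "set u \<subseteq> A - Top" using succs_sub[of c v] b(3) False n2 vVn
            by (auto simp: A_iff top_iff)
        qed
        then show ?thesis using gI by simp
      qed
    qed
    then show "g \<in> ?J" using gT by blast
  qed
  have sub: "ideal_gen A (relB Vn lev En :: ('v list \<Rightarrow> 'k) set) \<subseteq> ?J" by (rule ideal_gen_min[OF J gens])
  have "x \<in> ideal_gen A (relB Vn lev En)" using x by (simp add: RB_def)
  then show ?thesis using sub by blast
qed

end



lemma lin_indep_subset: "lin_indep L \<Longrightarrow> Y \<subseteq> L \<Longrightarrow> lin_indep Y"
  unfolding lin_indep_def by blast

lemma sum_in_span:
  assumes fin: "finite S" and inj: "inj_on f S"
  shows "(\<lambda>w. \<Sum>q\<in>S. c q * f q w) \<in> lin_span (f ` S)"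
proof -
  define c' where "c' l = c (the_inv_into S f l)" for l
  have "(\<lambda>w. \<Sum>l\<in>f ` S. c' l * l w) = (\<lambda>w. \<Sum>q\<in>S. c q * f q w)"
  proof
    fix w show "(\<Sum>l\<in>f ` S. c' l * l w) = (\<Sum>q\<in>S. c q * f q w)"
      by (subst sum.reindex[OF inj]) (auto simp: c'_def the_inv_into_f_f[OF inj] intro!: sum.cong)
  qed
  moreover have "(\<lambda>w. \<Sum>l\<in>f ` S. c' l * l w) \<in> lin_span (f ` S)"
    unfolding lin_span_def using fin by blast
  ultimately show ?thesis by simp
qed

lemma coeff_unique:
  assumes ind: "lin_indep (\<psi> ` T)" and inj: "inj_on \<psi> T" and fin: "finite T"
    and eq: "(\<lambda>w. \<Sum>r\<in>T. a r * \<psi> r w) = (\<lambda>w. \<Sum>r\<in>T. b r * \<psi> r w)"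
  shows "\<forall>r\<in>T. a r = b r"
proof -
  have "(\<lambda>w. \<Sum>r\<in>T. (a r - b r) * \<psi> r w) = tzero"
  proof
    fix w
    have "(\<Sum>r\<in>T. (a r - b r) * \<psi> r w) = (\<Sum>r\<in>T. a r * \<psi> r w) - (\<Sum>r\<in>T. b r * \<psi> r w)"
      by (simp add: algebra_simps sum_subtractf)
    also have "\<dots> = 0" using fun_cong[OF eq, of w] by simp
    finally show "(\<Sum>r\<in>T. (a r - b r) * \<psi> r w) = tzero w" by (simp add: tzero_def)
  qed
  from indep_reindex[OF ind inj fin this] show ?thesis by simp
qed

context LG begin

context
  fixes L :: "('v list \<Rightarrow> 'k::field) set" and \<psi> :: "'v \<Rightarrow> 'v list \<Rightarrow> 'k"
  assumes basis: "is_basis_of L (Bdeg V lev n)"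
    and bij: "bij_betw \<psi> Top L"
    and kap: "\<forall>v\<in>Top. kappa V lev E n (tmon [v]) = kappa V lev E n (\<psi> v)"
begin

lemma L_B: "L \<subseteq> Bdeg V lev n" using basis by (simp add: is_basis_of_def)
lemma L_ind: "lin_indep L" using basis by (simp add: is_basis_of_def)
lemma L_span: "Bdeg V lev n \<subseteq> lin_span L" using basis by (simp add: is_basis_of_def)
lemma psi_inj: "inj_on \<psi> Top" using bij by (simp add: bij_betw_def)
lemma psi_img: "\<psi> ` Top = L" using bij by (simp add: bij_betw_def)
lemma psi_B: "v \<in> Top \<Longrightarrow> \<psi> v \<in> Bdeg V lev n" using L_B psi_img by blast
lemma psi_ind: "lin_indep (\<psi> ` Top)" using L_ind psi_img by simp

lemma psi_expand: "v \<in> Top \<Longrightarrow> \<psi> v = (\<lambda>w. \<Sum>q\<in>Top. \<psi> v [q] * tmon [q] w)"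
  using Bdeg_expand[OF psi_B finV] by simp

definition MM :: "'v \<Rightarrow> 'v \<Rightarrow> 'k" where
  "MM p q = (if p \<in> Top then \<psi> p [q] else (if p = q then 1 else 0))"

lemma MM_ok: "Mok MM"
  unfolding Mok_def
proof (intro conjI ballI allI impI)
  fix p q assume p: "p \<in> A" and nz: "MM p q \<noteq> 0"
  have "q \<in> A \<and> lev q = lev p"
  proof (cases "p \<in> Top")
    case True
    then have "\<psi> p [q] \<noteq> 0" using nz by (simp add: MM_def)
    from Bdeg_nz[OF psi_B[OF True] this] have "q \<in> V" "lev q = n" by auto
    then show ?thesis using True n2 by (auto simp: A_iff top_iff)
  next
    case False then show ?thesis using nz p by (auto simp: MM_def split: if_splits)
  qed
  then show "q \<in> A" "lev q = lev p" by auto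
next
  fix p q assume "p \<in> A" "lev p \<noteq> n"
  then show "MM p q = (if p = q then 1 else 0)" by (auto simp: MM_def top_iff)
next
  fix p q assume p: "p \<in> Top" and nz: "MM p q \<noteq> 0"
  then have c: "\<psi> p [q] \<noteq> 0" by (simp add: MM_def)
  show "kappa V lev E n (tmon [p] :: 'v list \<Rightarrow> 'k) \<subseteq> kappa V lev E n (tmon [q])"
  proof
    fix b assume "b \<in> kappa V lev E n (tmon [p] :: 'v list \<Rightarrow> 'k)"
    then have "b \<in> kappa V lev E n (\<psi> p)" using kap p by simp
    then have bB: "b \<in> Bdeg V lev (n - 1)" and r: "tmul (\<psi> p) b \<in> RB V lev E"
      by (auto simp: kappa_def)
    have "rst {w. length w = 2 \<and> hd w = q} (tmul (\<psi> p) b) \<in> RB V lev E"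
      by (rule first_letter[OF r])
    moreover have "rst {w. length w = 2 \<and> hd w = q} (tmul (\<psi> p) b) = tscale (\<psi> p [q]) (tmul (tmon [q]) b)"
    proof
      fix w
      have e1: "tmul (\<psi> p) b w = (case w of [x, y] \<Rightarrow> \<psi> p [x] * b [y] | _ \<Rightarrow> 0)"
        by (rule tmul11[OF Bdeg_len1[OF psi_B[OF p]] Bdeg_len1[OF bB]])
      have e2: "tmul (tmon [q]) b w = (case w of [x, y] \<Rightarrow> tmon [q] [x] * b [y] | _ \<Rightarrow> 0)"
        by (rule tmul11[OF len1_tmon Bdeg_len1[OF bB]])
      show "rst {w. length w = 2 \<and> hd w = q} (tmul (\<psi> p) b) w = tscale (\<psi> p [q]) (tmul (tmon [q]) b) w"
        unfolding rst_def tscale_def e1 e2 by (auto simp: tmon_def split: list.splits)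
    qed
    ultimately have "tscale (\<psi> p [q]) (tmul (tmon [q]) b) \<in> RB V lev E" by simp
    then have "tmul (tmon [q]) b \<in> RB V lev E" using idscale_inv[OF RG_ideal] c by blast
    then show "b \<in> kappa V lev E n (tmon [q])" using bB by (simp add: kappa_def)
  qed
qed

definition DD :: "'v \<Rightarrow> 'v \<Rightarrow> 'k" where
  "DD u = (SOME d. tmon [u] = (\<lambda>w. \<Sum>v\<in>Top. d v * \<psi> v w))"

lemma DD_spec: "u \<in> Top \<Longrightarrow> tmon [u] = (\<lambda>w. \<Sum>v\<in>Top. DD u v * \<psi> v w)"
proof -
  assume u: "u \<in> Top"
  have "(tmon [u] :: 'v list \<Rightarrow> 'k) \<in> Bdeg V lev n" using u n2 by (intro tmon_Bdeg) (auto simp: top_iff)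
  then have "tmon [u] \<in> lin_span (\<psi> ` Top)" using L_span psi_img by blast
  from span_reindex[OF this psi_inj finTop] show ?thesis
    unfolding DD_def by (rule someI_ex)
qed

definition NN :: "'v \<Rightarrow> 'v \<Rightarrow> 'k" where
  "NN p q = (if p \<in> Top then (if q \<in> Top then DD p q else 0) else (if p = q then 1 else 0))"

lemma NN_support:
  assumes u: "u \<in> Top" and q: "q \<in> Top" and nz: "DD u q \<noteq> 0"
  shows "kappa V lev E n (tmon [u] :: 'v list \<Rightarrow> 'k) \<subseteq> kappa V lev E n (tmon [q])"
proof -
  define S where "S = {v \<in> Top. kappa V lev E n (tmon [u] :: 'v list \<Rightarrow> 'k) \<subseteq> kappa V lev E n (tmon [v])}"
  have SU: "S \<subseteq> Top" by (auto simp: S_def)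
  have finS: "finite S" using finTop SU by (rule finite_subset[rotated])
  have uS: "u \<in> S" using u by (simp add: S_def)
  have injS: "inj_on \<psi> S" using psi_inj SU by (rule inj_on_subset)
  have injt: "inj_on (\<lambda>v. tmon [v] :: 'v list \<Rightarrow> 'k) S" by (auto simp: inj_on_def tmon_def fun_eq_iff)
  let ?X = "(\<lambda>v. tmon [v] :: 'v list \<Rightarrow> 'k) ` S"
  let ?Y = "\<psi> ` S"
  have sub: "?Y \<subseteq> lin_span ?X"
  proof
    fix y assume "y \<in> ?Y"
    then obtain v where v: "v \<in> S" "y = \<psi> v" by blast
    have vT: "v \<in> Top" using v SU by blast
    have "\<psi> v = (\<lambda>w. \<Sum>q\<in>S. \<psi> v [q] * tmon [q] w)"
    proof
      fix w
      have "(\<Sum>q\<in>S. \<psi> v [q] * tmon [q] w) = (\<Sum>q\<in>Top. \<psi> v [q] * tmon [q] w)"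
      proof (rule sum.mono_neutral_left[OF finTop SU], intro ballI)
        fix q assume q: "q \<in> Top - S"
        have "\<psi> v [q] = 0"
        proof (rule ccontr)
          assume "\<psi> v [q] \<noteq> 0"
          then have "MM v q \<noteq> 0" using vT by (simp add: MM_def)
          then have "kappa V lev E n (tmon [v] :: 'v list \<Rightarrow> 'k) \<subseteq> kappa V lev E n (tmon [q])"
            using M_kappa[OF MM_ok vT] by blast
          then have "q \<in> S" using v(1) q by (auto simp: S_def)
          then show False using q by blast
        qed
        then show "\<psi> v [q] * tmon [q] w = 0" by simp
      qed
      then show "\<psi> v w = (\<Sum>q\<in>S. \<psi> v [q] * tmon [q] w)" using psi_expand[OF vT] by metis
    qed
    then show "y \<in> lin_span ?X" using v sum_in_span[OF finS injt, of "\<lambda>q. \<psi> v [q]"] by simp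
  qed
  have iY: "lin_indep ?Y" using lin_indep_subset[OF L_ind] psi_img SU by blast
  have fX: "finite ?X" using finS by simp
  have cY: "card ?Y = card ?X" using card_image[OF injS] card_image[OF injt] by simp
  have "?X \<subseteq> lin_span ?Y" by (rule steinitz[OF fX iY sub cY])
  then have "tmon [u] \<in> lin_span ?Y" using uS by blast
  then obtain d where d: "tmon [u] = (\<lambda>w. \<Sum>v\<in>S. d v * \<psi> v w)"
    using span_reindex[OF _ injS finS] by blast
  define d' where "d' v = (if v \<in> S then d v else 0)" for v
  have "(\<lambda>w. \<Sum>v\<in>Top. DD u v * \<psi> v w) = (\<lambda>w. \<Sum>v\<in>Top. d' v * \<psi> v w)"
  proof
    fix w
    have "(\<Sum>v\<in>Top. d' v * \<psi> v w) = (\<Sum>v\<in>S. d v * \<psi> v w)"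
      by (rule sum.mono_neutral_cong_right[OF finTop SU]) (auto simp: d'_def)
    then show "(\<Sum>v\<in>Top. DD u v * \<psi> v w) = (\<Sum>v\<in>Top. d' v * \<psi> v w)"
      using fun_cong[OF DD_spec[OF u], of w] fun_cong[OF d, of w] by simp
  qed
  from coeff_unique[OF psi_ind psi_inj finTop this] have "DD u q = d' q" using q by blast
  then have "q \<in> S" using nz by (auto simp: d'_def split: if_splits)
  then show ?thesis by (simp add: S_def)
qed

lemma NN_ok: "Mok NN"
  unfolding Mok_def
proof (intro conjI ballI allI impI)
  fix p q assume p: "p \<in> A" and nz: "NN p q \<noteq> 0"
  have "q \<in> A \<and> lev q = lev p"
  proof (cases "p \<in> Top")
    case True
    then have "q \<in> Top" using nz by (auto simp: NN_def split: if_splits)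
    then show ?thesis using True topA by (auto simp: top_iff)
  next
    case False then show ?thesis using nz p by (auto simp: NN_def split: if_splits)
  qed
  then show "q \<in> A" "lev q = lev p" by auto
next
  fix p q assume "p \<in> A" "lev p \<noteq> n"
  then show "NN p q = (if p = q then 1 else 0)" by (auto simp: NN_def top_iff)
next
  fix p q assume p: "p \<in> Top" and nz: "NN p q \<noteq> 0"
  then have "q \<in> Top" "DD p q \<noteq> 0" by (auto simp: NN_def split: if_splits)
  then show "kappa V lev E n (tmon [p] :: 'v list \<Rightarrow> 'k) \<subseteq> kappa V lev E n (tmon [q])"
    by (rule NN_support[OF p])
qed


lemma phi_top: "v \<in> Top \<Longrightarrow> subst A MM (tmon [v]) = \<psi> v"
proof
  fix w assume v: "v \<in> Top"
  have l: "len1 (\<psi> v)" using Bdeg_len1[OF psi_B[OF v]] .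
  show "subst A MM (tmon [v]) w = \<psi> v w"
    unfolding row[OF MM_ok topA[OF v]] using v l
    by (auto simp: MM_def len1_def split: list.splits)
qed

lemma phi_low: "v \<in> A \<Longrightarrow> v \<notin> Top \<Longrightarrow> subst A MM (tmon [v]) = tmon [v]"
  by (rule row_low[OF MM_ok]) (auto simp: top_iff A_iff)

lemma chi_low: "v \<in> A \<Longrightarrow> v \<notin> Top \<Longrightarrow> subst A NN (tmon [v]) = tmon [v]"
  by (rule row_low[OF NN_ok]) (auto simp: top_iff A_iff)

lemma chi_top: "u \<in> Top \<Longrightarrow> subst A NN (tmon [u]) = (\<lambda>w. \<Sum>q\<in>Top. DD u q * tmon [q] w)"
proof -
  assume u: "u \<in> Top"
  have "subst A NN (tmon [u]) = (\<lambda>w. \<Sum>q\<in>Top. NN u q * tmon [q] w)" by (rule row_sum[OF NN_ok u])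
  also have "\<dots> = (\<lambda>w. \<Sum>q\<in>Top. DD u q * tmon [q] w)" using u by (simp add: NN_def)
  finally show ?thesis .
qed

lemma phichi_letter: "v \<in> A \<Longrightarrow> subst A MM (subst A NN (tmon [v])) = tmon [v]"
proof (cases "v \<in> Top")
  case True
  have "subst A MM (subst A NN (tmon [v])) = (\<lambda>w. \<Sum>q\<in>Top. DD v q * subst A MM (tmon [q]) w)"
    unfolding chi_top[OF True] by (rule subst_sum[OF finTop])
  also have "\<dots> = (\<lambda>w. \<Sum>q\<in>Top. DD v q * \<psi> q w)"
    by (intro ext sum.cong refl) (simp add: phi_top)
  also have "\<dots> = tmon [v]" using DD_spec[OF True] by simp
  finally show ?thesis .
next
  case False
  assume "v \<in> A"
  then show ?thesis using False by (simp add: chi_low phi_low)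
qed

lemma phichi: "x \<in> tensor_alg A \<Longrightarrow> subst A MM (subst A NN x) = x"
  by (rule subst_comp_id[OF finA phichi_letter])

lemma chiphi_letter: "v \<in> A \<Longrightarrow> subst A NN (subst A MM (tmon [v])) = tmon [v]"
proof (cases "v \<in> Top")
  case True
  define y where "y = subst A NN (\<psi> v)"
  have pT: "\<psi> v \<in> tensor_alg A" using Bdeg_T[OF _ psi_B[OF True]] by simp
  have yT: "y \<in> tensor_alg A" unfolding y_def by (rule M_T[OF NN_ok pT])
  have yh: "hom_bideg lev 1 n y" unfolding y_def
  proof (rule subst_graded)
    show "\<forall>p\<in>A. \<forall>q. NN p q \<noteq> 0 \<longrightarrow> lev q = lev p" using M_lev[OF NN_ok] by blast
    show "hom_bideg lev 1 n (\<psi> v)" using psi_B[OF True] by (simp add: Bdeg_def)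
  qed
  have yB: "y \<in> Bdeg V lev n" using yT yh tensor_alg_mono[OF A_sub] by (auto simp: Bdeg_def)
  have ye: "y = (\<lambda>w. \<Sum>r\<in>Top. y [r] * tmon [r] w)" by (rule Bdeg_expand[OF yB finV])
  have "subst A MM y = \<psi> v" unfolding y_def by (rule phichi[OF pT])
  moreover have "subst A MM y = (\<lambda>w. \<Sum>r\<in>Top. y [r] * \<psi> r w)"
  proof -
    have "subst A MM y = (\<lambda>w. \<Sum>r\<in>Top. y [r] * subst A MM (tmon [r]) w)"
      by (subst ye) (rule subst_sum[OF finTop])
    also have "\<dots> = (\<lambda>w. \<Sum>r\<in>Top. y [r] * \<psi> r w)"
      by (intro ext sum.cong refl) (simp add: phi_top)
    finally show ?thesis .
  qed
  moreover have "\<psi> v = (\<lambda>w. \<Sum>r\<in>Top. (if r = v then 1 else 0) * \<psi> r w)"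
  proof
    fix w
    have "(\<Sum>r\<in>Top. (if r = v then 1 else 0) * \<psi> r w) = (\<Sum>r\<in>Top. if r = v then \<psi> r w else 0)"
      by (intro sum.cong refl) auto
    also have "\<dots> = \<psi> v w" using True finTop by (simp add: sum.delta)
    finally show "\<psi> v w = (\<Sum>r\<in>Top. (if r = v then 1 else 0) * \<psi> r w)" by simp
  qed
  ultimately have "(\<lambda>w. \<Sum>r\<in>Top. y [r] * \<psi> r w) = (\<lambda>w. \<Sum>r\<in>Top. (if r = v then 1 else 0) * \<psi> r w)"
    by simp
  from coeff_unique[OF psi_ind psi_inj finTop this] have co: "\<forall>r\<in>Top. y [r] = (if r = v then 1 else 0)" .
  have "y = tmon [v]"
  proof
    fix w
    have "y w = (\<Sum>r\<in>Top. y [r] * tmon [r] w)" using fun_cong[OF ye, of w] .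
    also have "\<dots> = (\<Sum>r\<in>Top. if r = v then tmon [r] w else 0)"
      using co by (intro sum.cong refl) auto
    also have "\<dots> = tmon [v] w" using True finTop by (simp add: sum.delta)
    finally show "y w = tmon [v] w" .
  qed
  then show ?thesis using True by (simp add: phi_top y_def)
next
  case False
  assume "v \<in> A"
  then show ?thesis using False by (simp add: chi_low phi_low)
qed

lemma chiphi: "x \<in> tensor_alg A \<Longrightarrow> subst A NN (subst A MM x) = x"
  by (rule subst_comp_id[OF finA chiphi_letter])

lemma backward: "upper_vertex_like V lev E n L"
proof -
  have I: "is_two_sided_ideal A (RB Vn lev En :: ('v list \<Rightarrow> 'k) set)" by (rule IB_ideal)
  let ?phi = "subst A MM"
  have refl: "\<And>z. tsub z z \<in> (RB Vn lev En :: ('v list \<Rightarrow> 'k) set)" by (rule tsub_refl[OF I])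
  have aut: "graded_alg_aut A lev (RB Vn lev En) ?phi"
    unfolding graded_alg_aut_def
  proof (intro conjI ballI allI impI)
    fix x :: "'v list \<Rightarrow> 'k" assume x: "x \<in> tensor_alg A"
    show "?phi x \<in> tensor_alg A" by (rule M_T[OF MM_ok x])
    {
      fix y :: "'v list \<Rightarrow> 'k" assume y: "y \<in> tensor_alg A"
      {
        assume "tsub x y \<in> RB Vn lev En"
        then have "?phi (tsub x y) \<in> RB Vn lev En" by (rule GEN[OF MM_ok])
        then show "tsub (?phi x) (?phi y) \<in> RB Vn lev En" by (simp add: subst_tsub)
      }
      show "tsub (?phi (tadd x y)) (tadd (?phi x) (?phi y)) \<in> RB Vn lev En"
        by (simp add: subst_tadd refl)
      show "tsub (?phi (tmul x y)) (tmul (?phi x) (?phi y)) \<in> RB Vn lev En"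
        by (simp add: subst_mul[OF finA] refl)
      {
        assume "tsub (?phi x) (?phi y) \<in> RB Vn lev En"
        then have "?phi (tsub x y) \<in> RB Vn lev En" by (simp add: subst_tsub)
        then have "subst A NN (?phi (tsub x y)) \<in> RB Vn lev En" by (rule GEN[OF NN_ok])
        then show "tsub x y \<in> RB Vn lev En" using chiphi[OF tsub_T[OF x y]] by simp
      }
    }
    fix c show "tsub (?phi (tscale c x)) (tscale c (?phi x)) \<in> RB Vn lev En"
      by (simp add: subst_tscale refl)
  next
    show "tsub (?phi (tmon [])) (tmon []) \<in> RB Vn lev En" by (simp add: subst_tmon_nil[OF finA] refl)
  next
    fix y :: "'v list \<Rightarrow> 'k" assume y: "y \<in> tensor_alg A"
    have "subst A NN y \<in> tensor_alg A" by (rule M_T[OF NN_ok y])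
    moreover have "tsub (?phi (subst A NN y)) y \<in> RB Vn lev En" using phichi[OF y] refl by simp
    ultimately show "\<exists>x\<in>tensor_alg A. tsub (?phi x) y \<in> RB Vn lev En" by blast
  next
    fix m d and x :: "'v list \<Rightarrow> 'k" assume x: "x \<in> tensor_alg A" and h: "hom_bideg lev m d x"
    have "?phi x \<in> tensor_alg A" by (rule M_T[OF MM_ok x])
    moreover have "hom_bideg lev m d (?phi x)"
    proof (rule subst_graded[OF _ h])
      show "\<forall>p\<in>A. \<forall>q. MM p q \<noteq> 0 \<longrightarrow> lev q = lev p" using M_lev[OF MM_ok] by blast
    qed
    ultimately show "\<exists>y\<in>tensor_alg A. hom_bideg lev m d y \<and> tsub (?phi x) y \<in> RB Vn lev En"
      using refl by blast
  qed
  have fixlow: "\<forall>v \<in> V. 1 \<le> lev v \<and> lev v \<le> n - 1 \<longrightarrow> tsub (?phi (tmon [v])) (tmon [v]) \<in> RB Vn lev En"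
  proof (intro ballI impI)
    fix v assume "v \<in> V" "1 \<le> lev v \<and> lev v \<le> n - 1"
    then have "v \<in> A" "v \<notin> Top" using n2 by (auto simp: A_iff top_iff)
    then show "tsub (?phi (tmon [v])) (tmon [v]) \<in> RB Vn lev En" by (simp add: phi_low refl)
  qed
  have onto1: "\<forall>v \<in> Top. \<exists>l \<in> L. tsub (?phi (tmon [v])) l \<in> RB Vn lev En"
  proof
    fix v assume v: "v \<in> Top"
    then have "\<psi> v \<in> L" using psi_img by blast
    then show "\<exists>l \<in> L. tsub (?phi (tmon [v])) l \<in> RB Vn lev En" using v refl by (auto simp: phi_top)
  qed
  have onto2: "\<forall>l \<in> L. \<exists>v \<in> Top. tsub (?phi (tmon [v])) l \<in> RB Vn lev En"
  proof
    fix l assume "l \<in> L"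
    then obtain v where v: "v \<in> Top" "l = \<psi> v" using psi_img by blast
    then show "\<exists>v \<in> Top. tsub (?phi (tmon [v])) l \<in> RB Vn lev En" using refl by (auto simp: phi_top)
  qed
  show ?thesis unfolding upper_vertex_like_def Let_def
    using aut fixlow onto1 onto2 by blast
qed

end
end



context LG begin

lemma IB_low0: "(x :: 'v list \<Rightarrow> 'k::field) \<in> RB Vn lev En \<Longrightarrow> low0 x"
  using IB_sub_RG RG_low0 by blast

lemma B_eq:
  fixes l l' :: "'v list \<Rightarrow> 'k::field"
  assumes l: "l \<in> Bdeg V lev m" and l': "l' \<in> Bdeg V lev m" and d: "tsub l l' \<in> RB Vn lev En"
  shows "l = l'"
proof
  fix w
  show "l w = l' w"
  proof (cases "length w \<le> 1")
    case True
    then have "tsub l l' w = 0" using IB_low0[OF d] by (simp add: low0_def)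
    then show ?thesis by (simp add: tsub_def)
  next
    case False
    have "l w = 0" using Bdeg_len1[OF l] False unfolding len1_def by fastforce
    moreover have "l' w = 0" using Bdeg_len1[OF l'] False unfolding len1_def by fastforce
    ultimately show ?thesis by simp
  qed
qed

lemma tsub_zero_right: "tsub x tzero = x"
  by (simp add: tsub_def tzero_def)

lemma forward:
  fixes L :: "('v list \<Rightarrow> 'k::field) set"
  assumes basis: "is_basis_of L (Bdeg V lev n)" and uvl: "upper_vertex_like V lev E n L"
  shows "\<exists>\<psi>. bij_betw \<psi> Top L \<and> (\<forall>v \<in> Top. kappa V lev E n (tmon [v]) = kappa V lev E n (\<psi> v))"
proof -
  have I: "is_two_sided_ideal A (RB Vn lev En :: ('v list \<Rightarrow> 'k) set)" by (rule IB_ideal)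
  have LB: "L \<subseteq> Bdeg V lev n" using basis by (simp add: is_basis_of_def)
  obtain \<phi> where aut: "graded_alg_aut A lev (RB Vn lev En) \<phi>"
    and fixlow: "\<forall>v \<in> V. 1 \<le> lev v \<and> lev v \<le> n - 1 \<longrightarrow> tsub (\<phi> (tmon [v])) (tmon [v]) \<in> RB Vn lev En"
    and onto1: "\<forall>v \<in> Top. \<exists>l \<in> L. tsub (\<phi> (tmon [v])) l \<in> RB Vn lev En"
    and onto2: "\<forall>l \<in> L. \<exists>v \<in> Top. tsub (\<phi> (tmon [v])) l \<in> RB Vn lev En"
    using uvl unfolding upper_vertex_like_def Let_def by blast
  note autd = aut[unfolded graded_alg_aut_def]
  have a1: "\<And>x. x \<in> tensor_alg A \<Longrightarrow> \<phi> x \<in> tensor_alg A" using autd by blast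
  have a2: "\<And>x y. x \<in> tensor_alg A \<Longrightarrow> y \<in> tensor_alg A \<Longrightarrow> tsub x y \<in> RB Vn lev En \<Longrightarrow>
      tsub (\<phi> x) (\<phi> y) \<in> RB Vn lev En" using autd by blast
  have a3: "\<And>x y. x \<in> tensor_alg A \<Longrightarrow> y \<in> tensor_alg A \<Longrightarrow>
      tsub (\<phi> (tadd x y)) (tadd (\<phi> x) (\<phi> y)) \<in> RB Vn lev En" using autd by blast
  have a4: "\<And>c x. x \<in> tensor_alg A \<Longrightarrow> tsub (\<phi> (tscale c x)) (tscale c (\<phi> x)) \<in> RB Vn lev En"
    using autd by blast
  have a5: "\<And>x y. x \<in> tensor_alg A \<Longrightarrow> y \<in> tensor_alg A \<Longrightarrow>
      tsub (\<phi> (tmul x y)) (tmul (\<phi> x) (\<phi> y)) \<in> RB Vn lev En" using autd by blast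
  have a7: "\<And>x y. x \<in> tensor_alg A \<Longrightarrow> y \<in> tensor_alg A \<Longrightarrow> tsub (\<phi> x) (\<phi> y) \<in> RB Vn lev En \<Longrightarrow>
      tsub x y \<in> RB Vn lev En" using autd by blast
  note trans = tsub_trans[OF I] and sym = tsub_sym[OF I]
  have phi0: "tsub (\<phi> tzero) tzero \<in> RB Vn lev En"
  proof -
    have "tsub (\<phi> (tscale 0 tzero)) (tscale 0 (\<phi> tzero)) \<in> RB Vn lev En" by (rule a4[OF tzero_T])
    moreover have "tscale 0 (tzero :: 'v list \<Rightarrow> 'k) = tzero" "tscale 0 (\<phi> tzero) = tzero"
      by (simp_all add: tscale_def tzero_def)
    ultimately show ?thesis by simp
  qed
  define \<psi> where "\<psi> v = (SOME l. l \<in> L \<and> tsub (\<phi> (tmon [v])) l \<in> RB Vn lev En)" for v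
  have psi: "\<psi> v \<in> L \<and> tsub (\<phi> (tmon [v])) (\<psi> v) \<in> RB Vn lev En" if v: "v \<in> Top" for v
  proof -
    have "\<exists>l. l \<in> L \<and> tsub (\<phi> (tmon [v])) l \<in> RB Vn lev En" using onto1 v by blast
    from someI_ex[of "\<lambda>l. l \<in> L \<and> tsub (\<phi> (tmon [v])) l \<in> RB Vn lev En", OF this]
    show ?thesis unfolding \<psi>_def .
  qed
  have tmonT: "tmon [v] \<in> (tensor_alg A :: ('v list \<Rightarrow> 'k) set)" if "v \<in> A" for v
    using that by (intro tmon_T) auto
  have tmonB: "tmon [v] \<in> (Bdeg V lev n :: ('v list \<Rightarrow> 'k) set)" if "v \<in> Top" for v
    using that n2 by (intro tmon_Bdeg) (auto simp: top_iff)
  have inj: "inj_on \<psi> Top"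
  proof (rule inj_onI)
    fix v v' assume v: "v \<in> Top" and v': "v' \<in> Top" and e: "\<psi> v = \<psi> v'"
    have "tsub (\<psi> v) (\<phi> (tmon [v'])) \<in> RB Vn lev En"
      using sym[OF conjunct2[OF psi[OF v']]] e by simp
    then have S: "tsub (\<phi> (tmon [v])) (\<phi> (tmon [v'])) \<in> RB Vn lev En"
      by (rule trans[OF conjunct2[OF psi[OF v]]])
    have X: "tmon [v] \<in> (tensor_alg A :: ('v list \<Rightarrow> 'k) set)" by (rule tmonT[OF topA[OF v]])
    have Y: "tmon [v'] \<in> (tensor_alg A :: ('v list \<Rightarrow> 'k) set)" by (rule tmonT[OF topA[OF v']])
    have "tsub (tmon [v]) (tmon [v'] :: 'v list \<Rightarrow> 'k) \<in> RB Vn lev En" by (rule a7[OF X Y S])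
    then have "(tmon [v] :: 'v list \<Rightarrow> 'k) = tmon [v']" by (rule B_eq[OF tmonB[OF v] tmonB[OF v']])
    then have "(tmon [v] :: 'v list \<Rightarrow> 'k) [v] = tmon [v'] [v]" by simp
    then show "v = v'" by (simp add: tmon_def split: if_splits)
  qed
  have img: "\<psi> ` Top = L"
  proof
    show "\<psi> ` Top \<subseteq> L" using psi by blast
    show "L \<subseteq> \<psi> ` Top"
    proof
      fix l assume l: "l \<in> L"
      then obtain v where v: "v \<in> Top" "tsub (\<phi> (tmon [v])) l \<in> RB Vn lev En" using onto2 by blast
      have "tsub l (\<psi> v) \<in> RB Vn lev En" using trans[OF sym[OF v(2)] conjunct2[OF psi[OF v(1)]]] .
      then have "l = \<psi> v" using B_eq[of l n "\<psi> v"] l LB psi[OF v(1)] by blast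
      then show "l \<in> \<psi> ` Top" using v by blast
    qed
  qed
  let ?Q = "lay V lev (n - 1)"
  have finQ: "finite ?Q" using finV by (simp add: lay_def)
  have QA: "?Q \<subseteq> A" using n2 by (auto simp: lay_def A_iff)
  have lin: "(\<lambda>w. \<Sum>q\<in>Q'. c q * tmon [q] w) \<in> tensor_alg A \<and>
      tsub (\<phi> (\<lambda>w. \<Sum>q\<in>Q'. c q * tmon [q] w)) (\<lambda>w. \<Sum>q\<in>Q'. c q * tmon [q] w) \<in> RB Vn lev En"
    if "Q' \<subseteq> ?Q" for Q' and c :: "'v \<Rightarrow> 'k"
  proof -
    have fQ': "finite Q'" using finQ that by (rule finite_subset[rotated])
    show ?thesis using fQ' that
    proof (induction Q' rule: finite_induct)
      case empty
      have "(\<lambda>w. \<Sum>q\<in>{}. c q * tmon [q] w) = (tzero :: 'v list \<Rightarrow> 'k)" by (simp add: tzero_def)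
      then show ?case using phi0 tzero_T by simp
    next
      case (insert a Q')
      let ?S = "\<lambda>w. \<Sum>q\<in>Q'. c q * (tmon [q] w :: 'k)"
      have aQ: "a \<in> ?Q" using insert by blast
      have aA: "a \<in> A" using aQ QA by blast
      have IH: "?S \<in> tensor_alg A" "tsub (\<phi> ?S) ?S \<in> RB Vn lev En" using insert by blast+
      have eq: "(\<lambda>w. \<Sum>q\<in>insert a Q'. c q * tmon [q] w) = tadd (tscale (c a) (tmon [a])) ?S"
        using insert(1,2) by (simp add: tadd_def tscale_def)
      have tT: "tscale (c a) (tmon [a]) \<in> tensor_alg A" using tscale_T[OF tmonT[OF aA]] .
      have s1: "tsub (\<phi> (tadd (tscale (c a) (tmon [a])) ?S)) (tadd (\<phi> (tscale (c a) (tmon [a]))) (\<phi> ?S)) \<in> RB Vn lev En"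
        by (rule a3[OF tT IH(1)])
      have fa: "tsub (\<phi> (tmon [a])) (tmon [a]) \<in> RB Vn lev En"
        using fixlow aQ n2 by (auto simp: lay_def)
      have s2: "tsub (\<phi> (tscale (c a) (tmon [a]))) (tscale (c a) (tmon [a])) \<in> RB Vn lev En"
        using trans[OF a4[OF tmonT[OF aA]] tsub_tscale[OF I fa]] .
      have s3: "tsub (tadd (\<phi> (tscale (c a) (tmon [a]))) (\<phi> ?S)) (tadd (tscale (c a) (tmon [a])) ?S) \<in> RB Vn lev En"
        by (rule tsub_tadd[OF I s2 IH(2)])
      show ?case unfolding eq using trans[OF s1 s3] tadd_T[OF tT IH(1)] by blast
    qed
  qed
  have fixB: "tsub (\<phi> b) b \<in> RB Vn lev En" if b: "b \<in> Bdeg V lev (n - 1)" for b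
    using conjunct2[OF lin[of ?Q "\<lambda>q. b [q]"]] Bdeg_expand[OF b finV] by simp
  have kap: "kappa V lev E n (tmon [v]) = kappa V lev E n (\<psi> v)" if v: "v \<in> Top" for v
  proof -
    have vB: "(tmon [v] :: 'v list \<Rightarrow> 'k) \<in> Bdeg V lev n" by (rule tmonB[OF v])
    have pB: "\<psi> v \<in> Bdeg V lev n" using psi[OF v] LB by blast
    have pT: "\<psi> v \<in> tensor_alg A" by (rule Bdeg_T[OF _ pB]) simp
    have vT: "(tmon [v] :: 'v list \<Rightarrow> 'k) \<in> tensor_alg A" by (rule tmonT[OF topA[OF v]])
    have key: "tsub (\<phi> (tmul (tmon [v]) b)) (tmul (\<psi> v) b) \<in> RB Vn lev En \<and> tmul (tmon [v]) b \<in> tensor_alg A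
        \<and> tmul (\<psi> v) b \<in> tensor_alg A"
      if b: "b \<in> Bdeg V lev (n - 1)" for b
    proof -
      have bT: "b \<in> tensor_alg A" by (rule Bdeg_T[OF _ b]) simp
      have "tsub (tmul (\<phi> (tmon [v])) (\<phi> b)) (tmul (\<psi> v) b) \<in> RB Vn lev En"
        by (rule tsub_tmul[OF I a1[OF vT] pT a1[OF bT] bT conjunct2[OF psi[OF v]] fixB[OF b]])
      then show ?thesis using trans[OF a5[OF vT bT]] tmul_T[OF vT bT] tmul_T[OF pT bT] by blast
    qed
    show ?thesis
    proof (intro set_eqI iffI)
      fix b :: "'v list \<Rightarrow> 'k" assume "b \<in> kappa V lev E n (tmon [v])"
      then have b: "b \<in> Bdeg V lev (n - 1)" and r: "tmul (tmon [v]) b \<in> RB V lev E" by (auto simp: kappa_def)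
      have "tmul (tmon [v]) b \<in> RB Vn lev En" using kappa_bridge[OF vB b] r by blast
      then have "tsub (tmul (tmon [v]) b) tzero \<in> RB Vn lev En" by (simp add: tsub_zero_right)
      then have "tsub (\<phi> (tmul (tmon [v]) b)) (\<phi> tzero) \<in> RB Vn lev En"
        using a2 key[OF b] tzero_T by blast
      then have "tsub (tmul (\<psi> v) b) tzero \<in> RB Vn lev En"
        using trans[OF sym[OF conjunct1[OF key[OF b]]] trans[OF _ phi0]] by blast
      then have "tmul (\<psi> v) b \<in> RB Vn lev En" by (simp add: tsub_zero_right)
      then have "tmul (\<psi> v) b \<in> RB V lev E" using kappa_bridge[OF pB b] by blast
      then show "b \<in> kappa V lev E n (\<psi> v)" using b by (simp add: kappa_def)
    next
      fix b :: "'v list \<Rightarrow> 'k" assume "b \<in> kappa V lev E n (\<psi> v)"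
      then have b: "b \<in> Bdeg V lev (n - 1)" and r: "tmul (\<psi> v) b \<in> RB V lev E" by (auto simp: kappa_def)
      have "tmul (\<psi> v) b \<in> RB Vn lev En" using kappa_bridge[OF pB b] r by blast
      then have "tsub (tmul (\<psi> v) b) tzero \<in> RB Vn lev En" by (simp add: tsub_zero_right)
      then have "tsub (\<phi> (tmul (tmon [v]) b)) (\<phi> tzero) \<in> RB Vn lev En"
        using trans[OF conjunct1[OF key[OF b]] trans[OF _ sym[OF phi0]]] by blast
      then have "tsub (tmul (tmon [v]) b) tzero \<in> RB Vn lev En"
        using a7 key[OF b] tzero_T by blast
      then have "tmul (tmon [v]) b \<in> RB Vn lev En" by (simp add: tsub_zero_right)
      then have "tmul (tmon [v]) b \<in> RB V lev E" using kappa_bridge[OF vB b] by blast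
      then show "b \<in> kappa V lev E n (tmon [v])" using b by (simp add: kappa_def)
    qed
  qed
  show ?thesis using inj img kap unfolding bij_betw_def by blast
qed

end


theorem mainTheorem12:
  fixes V :: "'v set" and lev :: "'v \<Rightarrow> nat" and E :: "('v \<times> 'v) set"
    and n :: nat and L :: "('v list \<Rightarrow> 'k::field) set"
  assumes "layered_graph V lev E"
    and "uniform V lev E"
    and "card (lay V lev 0) = 1"
    and "2 \<le> n"
    and "is_basis_of L (Bdeg V lev n)"
  shows "upper_vertex_like V lev E n L \<longleftrightarrow>
         (\<exists>\<psi>. bij_betw \<psi> (lay V lev n) L \<and>
               (\<forall>v \<in> lay V lev n. kappa V lev E n (tmon [v]) = kappa V lev E n (\<psi> v)))"
  proof -
  interpret LG V lev E n using assms(1,4) by unfold_locales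
  show ?thesis using forward[OF assms(5)] backward[OF assms(5)] by blast
qed

end
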